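(* Let $G$ be a connected graph on $n$ vertices and $(T,w)$ its weighted block tree. Then exactly one of the following holds: 1. $T$ has exactly one centroid $c$, and $\mathrm{hs}(c)<n/2$. 2. $T$ has exactly two centroids $v$ and $B$, where $v$ is a cut vertex of $G$ and $B$ is a block of $G$ containing $v$; removing the edge $vB$ partitions $T$ into two subtrees $T_1\ni v$, $T_2\ni B$ of weight $n/2$ each, and every subtree of $T_1$ not containing $v$ (resp. of $T_2$ not containing $B$) has weight at most $n/2-1$. 3. $T$ contains a zero-weight block vertex $B$ which is the unique central centroid of $T$ (and $T$ has exactly three centroids), whose removal partitions $T$ into two subtrees of weight $n/2$ each; consequently the block $B$ is isomorphic to $K_2$.
   Context: A block of a graph is a maximal connected subgraph without a cut vertex. The block tree of a connected graph $G$ has as vertices the cut vertices of $G$ and the blocks of $G$, with a cut vertex $v$ adjacent to a block $B$ iff $v\in V(B)$. The weighted block tree assigns weight $1$ to each cut vertex and, to each block $B$, the number of vertices of $B$ that are not cut vertices of $G$. For a weighted tree $(T,w)$ and vertex $x$, the subtrees of $x$ are the components of $T-x$, their weight is the sum of weights of their vertices, and $\mathrm{hs}(x)$ is the maximum weight of a subtree of $x$ ($0$ if $T$ has one vertex). A centroid is a vertex minimizing $\mathrm{hs}$; the centroids form the vertex set of a path, and a centroid is central if it is a center (middle vertex) of that path. *)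

theory Defs
  imports Complex_Main
begin

type_synonym 'a sgraph = "'a set \<times> 'a set set"

definition verts :: "'a sgraph \<Rightarrow> 'a set" where "verts G = fst G"
definition edges :: "'a sgraph \<Rightarrow> 'a set set" where "edges G = snd G"

definition wf_graph :: "'a sgraph \<Rightarrow> bool" where
  "wf_graph G \<longleftrightarrow> finite (verts G) \<and>
     (\<forall>e\<in>edges G. \<exists>x y. x \<noteq> y \<and> e = {x, y} \<and> x \<in> verts G \<and> y \<in> verts G)"

definition walk :: "'a sgraph \<Rightarrow> 'a list \<Rightarrow> bool" where
  "walk G xs \<longleftrightarrow> xs \<noteq> [] \<and> set xs \<subseteq> verts G \<and>
     (\<forall>i. Suc i < length xs \<longrightarrow> {xs ! i, xs ! Suc i} \<in> edges G)"

definition reachable :: "'a sgraph \<Rightarrow> 'a \<Rightarrow> 'a \<Rightarrow> bool" where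
  "reachable G x y \<longleftrightarrow> (\<exists>xs. walk G xs \<and> hd xs = x \<and> last xs = y)"

definition connected_graph :: "'a sgraph \<Rightarrow> bool" where
  "connected_graph G \<longleftrightarrow> verts G \<noteq> {} \<and> (\<forall>x\<in>verts G. \<forall>y\<in>verts G. reachable G x y)"

definition components :: "'a sgraph \<Rightarrow> 'a set set" where
  "components G = (\<lambda>x. {y \<in> verts G. reachable G x y}) ` verts G"

definition delete_vertex :: "'a sgraph \<Rightarrow> 'a \<Rightarrow> 'a sgraph" where
  "delete_vertex G v = (verts G - {v}, {e \<in> edges G. v \<notin> e})"

definition induced :: "'a sgraph \<Rightarrow> 'a set \<Rightarrow> 'a sgraph" where
  "induced G S = (S, {e \<in> edges G. e \<subseteq> S})"

definition subgraph :: "'a sgraph \<Rightarrow> 'a sgraph \<Rightarrow> bool" where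
  "subgraph H G \<longleftrightarrow> verts H \<subseteq> verts G \<and> edges H \<subseteq> edges G \<and>
     (\<forall>e\<in>edges H. e \<subseteq> verts H)"

definition cut_vertex :: "'a sgraph \<Rightarrow> 'a \<Rightarrow> bool" where
  "cut_vertex G v \<longleftrightarrow> v \<in> verts G \<and>
     card (components (delete_vertex G v)) > card (components G)"

definition biconn_piece :: "'a sgraph \<Rightarrow> 'a sgraph \<Rightarrow> bool" where
  "biconn_piece G H \<longleftrightarrow> subgraph H G \<and> connected_graph H \<and> (\<forall>v. \<not> cut_vertex H v)"

definition is_block :: "'a sgraph \<Rightarrow> 'a sgraph \<Rightarrow> bool" where
  "is_block G B \<longleftrightarrow> biconn_piece G B \<and>
     (\<forall>H. biconn_piece G H \<and> subgraph B H \<longrightarrow> H = B)"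

type_synonym 'a btvert = "'a + 'a sgraph"

definition block_tree :: "'a sgraph \<Rightarrow> 'a btvert sgraph" where
  "block_tree G =
     (Inl ` {v. cut_vertex G v} \<union> Inr ` {B. is_block G B},
      {{Inl v, Inr B} | v B. cut_vertex G v \<and> is_block G B \<and> v \<in> verts B})"

definition bt_weight :: "'a sgraph \<Rightarrow> 'a btvert \<Rightarrow> nat" where
  "bt_weight G x = (case x of Inl v \<Rightarrow> 1
                   | Inr B \<Rightarrow> card {u \<in> verts B. \<not> cut_vertex G u})"

definition set_weight :: "('b \<Rightarrow> nat) \<Rightarrow> 'b set \<Rightarrow> nat" where
  "set_weight w S = (\<Sum>x\<in>S. w x)"

definition subtrees_of :: "'b sgraph \<Rightarrow> 'b \<Rightarrow> 'b set set" where
  "subtrees_of T x = components (delete_vertex T x)"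

definition hs :: "'b sgraph \<Rightarrow> ('b \<Rightarrow> nat) \<Rightarrow> 'b \<Rightarrow> nat" where
  "hs T w x = Max (insert 0 (set_weight w ` subtrees_of T x))"

definition centroid :: "'b sgraph \<Rightarrow> ('b \<Rightarrow> nat) \<Rightarrow> 'b \<Rightarrow> bool" where
  "centroid T w x \<longleftrightarrow> x \<in> verts T \<and> (\<forall>y\<in>verts T. hs T w x \<le> hs T w y)"

definition centroids :: "'b sgraph \<Rightarrow> ('b \<Rightarrow> nat) \<Rightarrow> 'b set" where
  "centroids T w = {x. centroid T w x}"

definition gdist :: "'b sgraph \<Rightarrow> 'b \<Rightarrow> 'b \<Rightarrow> nat" where
  "gdist G x y = (LEAST n. \<exists>xs. walk G xs \<and> hd xs = x \<and> last xs = y \<and> length xs = Suc n)"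

definition ecc :: "'b sgraph \<Rightarrow> 'b \<Rightarrow> nat" where
  "ecc G x = Max (gdist G x ` verts G)"

text \<open>A centroid is central if it is a center (vertex of minimum eccentricity)
  of the path formed by the centroids (the subgraph of T induced by them).\<close>
definition central_centroid :: "'b sgraph \<Rightarrow> ('b \<Rightarrow> nat) \<Rightarrow> 'b \<Rightarrow> bool" where
  "central_centroid T w c \<longleftrightarrow> centroid T w c \<and>
     (\<forall>c'\<in>centroids T w. ecc (induced T (centroids T w)) c
                          \<le> ecc (induced T (centroids T w)) c')"

definition side_of_edge :: "'b sgraph \<Rightarrow> 'b set \<Rightarrow> 'b \<Rightarrow> 'b set" where
  "side_of_edge T e x = {y \<in> verts T. reachable (verts T, edges T - {e}) x y}"

definition subtree_set :: "'b sgraph \<Rightarrow> 'b set \<Rightarrow> bool" where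
  "subtree_set T S \<longleftrightarrow> S \<subseteq> verts T \<and> connected_graph (induced T S)"

end

theory Submission
  imports Defs
begin

lemma verts_pair[simp]: "verts (V, E) = V" by (simp add: verts_def)
lemma edges_pair[simp]: "edges (V, E) = E" by (simp add: edges_def)

lemma verts_del[simp]: "verts (delete_vertex G v) = verts G - {v}"
  by (simp add: delete_vertex_def)
lemma edges_del[simp]: "edges (delete_vertex G v) = {e \<in> edges G. v \<notin> e}"
  by (simp add: delete_vertex_def)
lemma verts_ind[simp]: "verts (induced G S) = S" by (simp add: induced_def)
lemma edges_ind[simp]: "edges (induced G S) = {e \<in> edges G. e \<subseteq> S}" by (simp add: induced_def)

lemma walk_Nil[simp]: "\<not> walk G []" by (simp add: walk_def)
lemma walk_single[simp]: "walk G [x] \<longleftrightarrow> x \<in> verts G" by (simp add: walk_def)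
lemma walk_Cons2[simp]: "walk G (x # y # xs) \<longleftrightarrow> x \<in> verts G \<and> {x, y} \<in> edges G \<and> walk G (y # xs)"
proof
  assume w: "walk G (x # y # xs)"
  have "Suc 0 < length (x # y # xs)" by simp
  then have "{(x # y # xs) ! 0, (x # y # xs) ! Suc 0} \<in> edges G" using w unfolding walk_def by blast
  then have "{x,y} \<in> edges G" by simp
  moreover have "walk G (y # xs)" unfolding walk_def
  proof (intro conjI allI impI)
    show "set (y # xs) \<subseteq> verts G" using w by (simp add: walk_def)
  next
    fix i assume "Suc i < length (y # xs)"
    then have "Suc (Suc i) < length (x # y # xs)" by simp
    then have "{(x # y # xs) ! Suc i, (x # y # xs) ! Suc (Suc i)} \<in> edges G" using w unfolding walk_def by blast
    then show "{(y # xs) ! i, (y # xs) ! Suc i} \<in> edges G" by simp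
  qed simp
  ultimately show "x \<in> verts G \<and> {x, y} \<in> edges G \<and> walk G (y # xs)" using w by (simp add: walk_def)
next
  assume h: "x \<in> verts G \<and> {x, y} \<in> edges G \<and> walk G (y # xs)"
  show "walk G (x # y # xs)" unfolding walk_def
  proof (intro conjI allI impI)
    show "set (x # y # xs) \<subseteq> verts G" using h by (simp add: walk_def)
  next
    fix i assume "Suc i < length (x # y # xs)"
    then show "{(x # y # xs) ! i, (x # y # xs) ! Suc i} \<in> edges G"
      using h by (cases i) (auto simp: walk_def)
  qed simp
qed

lemma walk_Cons_iff: "walk G (x # xs) \<longleftrightarrow> x \<in> verts G \<and> (xs = [] \<or> ({x, hd xs} \<in> edges G \<and> walk G xs))"
  by (cases xs) auto

definition adj :: "'a sgraph \<Rightarrow> ('a \<times> 'a) set" where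
  "adj G = {(x,y). x \<in> verts G \<and> y \<in> verts G \<and> {x,y} \<in> edges G}"

lemma reachable_iff: "reachable G x y \<longleftrightarrow> x \<in> verts G \<and> (x,y) \<in> (adj G)\<^sup>*"
proof
  assume "reachable G x y"
  then obtain xs where w: "walk G xs" "hd xs = x" "last xs = y" unfolding reachable_def by blast
  have "x \<in> verts G \<and> (x, last xs) \<in> (adj G)\<^sup>*" if "walk G xs" "hd xs = x" for xs x
    using that
  proof (induction xs arbitrary: x)
    case Nil then show ?case by simp
  next
    case (Cons a xs)
    show ?case
    proof (cases xs)
      case Nil then show ?thesis using Cons by auto
    next
      case (Cons b ys)
      have "b \<in> verts G" using Cons.prems Cons by (auto simp: walk_Cons_iff)
      then have "(a, b) \<in> adj G" using Cons.prems Cons by (auto simp: adj_def)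
      moreover have "(b, last xs) \<in> (adj G)\<^sup>*" using Cons.IH[of b] Cons.prems Cons by auto
      ultimately show ?thesis using Cons.prems Cons by auto
    qed
  qed
  then show "x \<in> verts G \<and> (x, y) \<in> (adj G)\<^sup>*" using w by auto
next
  assume "x \<in> verts G \<and> (x, y) \<in> (adj G)\<^sup>*"
  then have "(x,y) \<in> (adj G)\<^sup>*" "x \<in> verts G" by auto
  then show "reachable G x y"
  proof (induction rule: converse_rtrancl_induct)
    case base then show ?case unfolding reachable_def by (intro exI[of _ "[y]"]) auto
  next
    case (step a b)
    then have "b \<in> verts G" "{a,b} \<in> edges G" by (auto simp: adj_def)
    with step obtain xs where "walk G xs" "hd xs = b" "last xs = y" unfolding reachable_def by blast
    then show ?case unfolding reachable_def using \<open>{a,b} \<in> edges G\<close> step.prems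
      by (intro exI[of _ "a # xs"]) (cases xs, auto)
  qed
qed

lemma reachable_refl: "x \<in> verts G \<Longrightarrow> reachable G x x" by (simp add: reachable_iff)
lemma reachable_in: "reachable G x y \<Longrightarrow> x \<in> verts G \<and> y \<in> verts G"
proof -
  assume "reachable G x y"
  then obtain xs where "walk G xs" "hd xs = x" "last xs = y" unfolding reachable_def by blast
  then show ?thesis unfolding walk_def by (auto intro: hd_in_set last_in_set)
qed
lemma reachable_trans: "reachable G x y \<Longrightarrow> reachable G y z \<Longrightarrow> reachable G x z"
  by (auto simp: reachable_iff)
lemma adj_sym: "(x,y) \<in> adj G \<Longrightarrow> (y,x) \<in> adj G" unfolding adj_def by (simp add: insert_commute)
lemma reachable_sym: "reachable G x y \<Longrightarrow> reachable G y x"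
proof -
  assume r: "reachable G x y"
  then have "(x,y) \<in> (adj G)\<^sup>*" by (simp add: reachable_iff)
  then have "(y,x) \<in> (adj G)\<^sup>*"
    by (induction rule: rtrancl_induct) (auto intro: converse_rtrancl_into_rtrancl adj_sym)
  then show ?thesis using reachable_in[OF r] by (simp add: reachable_iff)
qed
lemma reachable_edge: "{x,y} \<in> edges G \<Longrightarrow> x \<in> verts G \<Longrightarrow> y \<in> verts G \<Longrightarrow> reachable G x y"
  by (auto simp: reachable_iff adj_def)

lemma reachable_mono: "reachable G x y \<Longrightarrow> verts G \<subseteq> verts H \<Longrightarrow> edges G \<subseteq> edges H \<Longrightarrow> reachable H x y"
proof -
  assume r: "reachable G x y" and s: "verts G \<subseteq> verts H" "edges G \<subseteq> edges H"
  have "adj G \<subseteq> adj H" using s by (auto simp: adj_def)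
  then show ?thesis using r s by (auto simp: reachable_iff dest: rtrancl_mono[THEN subsetD])
qed

lemma reachable_induct[consumes 1, case_names base step]:
  assumes "reachable G x y" "P x"
    "\<And>a b. reachable G x a \<Longrightarrow> P a \<Longrightarrow> {a,b} \<in> edges G \<Longrightarrow> a \<in> verts G \<Longrightarrow> b \<in> verts G \<Longrightarrow> P b"
  shows "P y"
proof -
  have "(x,y) \<in> (adj G)\<^sup>*" "x \<in> verts G" using assms(1) by (auto simp: reachable_iff)
  then show ?thesis
  proof (induction rule: rtrancl_induct)
    case base then show ?case using assms(2) by simp
  next
    case (step a b)
    then show ?case using assms(3)[of a b] by (auto simp: adj_def reachable_iff)
  qed
qed

lemma components_all_reach:
  assumes "finite (verts G)"
  shows "card (components G) \<le> 1 \<longleftrightarrow> (\<forall>a\<in>verts G. \<forall>b\<in>verts G. reachable G a b)"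
proof
  assume c: "card (components G) \<le> 1"
  show "\<forall>a\<in>verts G. \<forall>b\<in>verts G. reachable G a b"
  proof (intro ballI, rule ccontr)
    fix a b assume ab: "a \<in> verts G" "b \<in> verts G" "\<not> reachable G a b"
    let ?c = "\<lambda>x. {y \<in> verts G. reachable G x y}"
    have "?c a \<noteq> ?c b" using ab reachable_refl[of b G] by auto
    moreover have "?c a \<in> components G" "?c b \<in> components G" using ab by (auto simp: components_def)
    moreover have "finite (components G)" using assms by (simp add: components_def)
    ultimately have "card {?c a, ?c b} \<le> card (components G)" by (intro card_mono) auto
    then show False using c \<open>?c a \<noteq> ?c b\<close> by simp
  qed
next
  assume "\<forall>a\<in>verts G. \<forall>b\<in>verts G. reachable G a b"
  then have "components G \<subseteq> {verts G}" by (auto simp: components_def dest: reachable_in)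
  then have "card (components G) \<le> card {verts G}" by (intro card_mono) auto
  then show "card (components G) \<le> 1" by simp
qed

lemma components_conn: "connected_graph G \<Longrightarrow> card (components G) = 1"
proof -
  assume c: "connected_graph G"
  then have "components G = {verts G}" unfolding components_def connected_graph_def
    by (auto dest: reachable_in)
  then show ?thesis by simp
qed

lemma cut_vertex_iff:
  assumes "finite (verts G)" "connected_graph G"
  shows "cut_vertex G v \<longleftrightarrow> v \<in> verts G \<and> (\<exists>a\<in>verts G - {v}. \<exists>b\<in>verts G - {v}. \<not> reachable (delete_vertex G v) a b)"
  using components_all_reach[of "delete_vertex G v"] assms components_conn[OF assms(2)]
  unfolding cut_vertex_def by auto

fun pedges :: "'a list \<Rightarrow> 'a set set" where
  "pedges (x # y # xs) = insert {x,y} (pedges (y # xs))"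
| "pedges _ = {}"

lemma walk_pedges: "walk G xs \<longleftrightarrow> xs \<noteq> [] \<and> set xs \<subseteq> verts G \<and> pedges xs \<subseteq> edges G"
proof (induction xs rule: pedges.induct)
  case (1 x y xs) then show ?case by auto
next
  case "2_1" then show ?case by simp
next
  case ("2_2" v) then show ?case by simp
qed

lemma pedges_sub: "e \<in> pedges xs \<Longrightarrow> e \<subseteq> set xs"
  by (induction xs rule: pedges.induct) auto

lemma pedges_append: "pedges (xs @ y # ys) = pedges (xs @ [y]) \<union> pedges (y # ys)"
  by (induction xs rule: pedges.induct) auto

lemma pedges_snoc: "xs \<noteq> [] \<Longrightarrow> pedges (xs @ [y]) = insert {last xs, y} (pedges xs)"
  by (induction xs rule: pedges.induct) auto

lemma pedges_app2: "xs \<noteq> [] \<Longrightarrow> ys \<noteq> [] \<Longrightarrow> pedges (xs @ ys) = pedges xs \<union> insert {last xs, hd ys} (pedges ys)"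
  using pedges_append[of xs "hd ys" "tl ys"] pedges_snoc[of xs "hd ys"] by (cases ys) auto

definition pgraph :: "'a list \<Rightarrow> 'a sgraph" where "pgraph xs = (set xs, pedges xs)"

lemma pgraph_reach: "xs \<noteq> [] \<Longrightarrow> u \<in> set xs \<Longrightarrow> reachable (pgraph xs) (hd xs) u"
proof (induction xs rule: pedges.induct)
  case (1 x y xs)
  show ?case
  proof (cases "u = x")
    case True then show ?thesis by (auto simp: pgraph_def intro: reachable_refl)
  next
    case False
    then have "reachable (pgraph (y # xs)) y u" using 1 by auto
    then have "reachable (pgraph (x # y # xs)) y u"
      by (rule reachable_mono) (auto simp: pgraph_def)
    moreover have "reachable (pgraph (x # y # xs)) x y"
      by (rule reachable_edge) (auto simp: pgraph_def)
    ultimately show ?thesis by (auto intro: reachable_trans)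
  qed
qed (auto simp: pgraph_def intro: reachable_refl)

lemma walk_prefix: "walk G (xs @ ys) \<Longrightarrow> xs \<noteq> [] \<Longrightarrow> walk G xs"
  using pedges_append[of xs "hd ys" "tl ys"] pedges_snoc[of xs "hd ys"]
  by (cases ys) (auto simp: walk_pedges)

lemma walk_suffix: "walk G (xs @ ys) \<Longrightarrow> ys \<noteq> [] \<Longrightarrow> walk G ys"
  using pedges_app2[of xs ys] by (cases "xs = []") (auto simp: walk_pedges)

lemma walk_app: "walk G xs \<Longrightarrow> walk G ys \<Longrightarrow> {last xs, hd ys} \<in> edges G \<Longrightarrow> walk G (xs @ ys)"
  using pedges_app2[of xs ys] by (auto simp: walk_pedges)

lemma reachable_distinct:
  assumes "reachable G a b"
  shows "\<exists>xs. walk G xs \<and> distinct xs \<and> hd xs = a \<and> last xs = b"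
proof -
  have "(a,b) \<in> (adj G)\<^sup>*" "a \<in> verts G" using assms by (auto simp: reachable_iff)
  then show ?thesis
  proof (induction rule: converse_rtrancl_induct)
    case base then show ?case by (intro exI[of _ "[b]"]) auto
  next
    case (step x x')
    then have e: "{x,x'} \<in> edges G" "x' \<in> verts G" "x \<in> verts G" by (auto simp: adj_def)
    then obtain xs where xs: "walk G xs" "distinct xs" "hd xs = x'" "last xs = b" using step by auto
    show ?case
    proof (cases "x \<in> set xs")
      case True
      then obtain ys zs where yz: "xs = ys @ x # zs" by (meson split_list)
      then have "walk G (x # zs)" using xs walk_suffix by blast
      moreover have "distinct (x # zs)" using xs yz by auto
      moreover have "last (x # zs) = b" using xs yz by (cases zs) auto
      ultimately show ?thesis by (intro exI[of _ "x # zs"]) auto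
    next
      case False
      have "xs \<noteq> []" using xs by auto
      then have "walk G (x # xs)" using xs e by (cases xs) auto
      then show ?thesis using False xs \<open>xs \<noteq> []\<close> by (intro exI[of _ "x # xs"]) auto
    qed
  qed
qed

lemma walk_reachable: "walk G xs \<Longrightarrow> reachable G (hd xs) (last xs)"
  unfolding reachable_def by blast

lemma pgraph_reach_mono:
  assumes "walk G xs" "u \<in> set xs" "set xs \<subseteq> verts H" "pedges xs \<subseteq> edges H"
  shows "reachable H (hd xs) u"
  using pgraph_reach[of xs u] assms reachable_mono[of "pgraph xs" "hd xs" u H]
  by (auto simp: pgraph_def walk_pedges)

definition nocut :: "'a sgraph \<Rightarrow> bool" where
  "nocut H \<longleftrightarrow> (\<forall>v\<in>verts H. \<forall>a\<in>verts H - {v}. \<forall>b\<in>verts H - {v}. reachable (delete_vertex H v) a b)"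

lemma subgraph_finite: "subgraph H G \<Longrightarrow> finite (verts G) \<Longrightarrow> finite (verts H)"
  unfolding subgraph_def by (auto intro: finite_subset)

lemma bp_iff:
  assumes "finite (verts G)"
  shows "biconn_piece G H \<longleftrightarrow> subgraph H G \<and> connected_graph H \<and> nocut H"
proof -
  have "(\<forall>v. \<not> cut_vertex H v) \<longleftrightarrow> nocut H" if "subgraph H G" "connected_graph H"
    using cut_vertex_iff[OF subgraph_finite[OF that(1) assms] that(2)] unfolding nocut_def by blast
  then show ?thesis unfolding biconn_piece_def by blast
qed

lemma walk_mono: "walk H xs \<Longrightarrow> verts H \<subseteq> verts G \<Longrightarrow> edges H \<subseteq> edges G \<Longrightarrow> walk G xs"
  by (auto simp: walk_pedges)

lemma nocut_del:
  assumes "subgraph H G" "connected_graph H" "nocut H" "a \<in> verts H - {v}" "b \<in> verts H - {v}"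
  shows "reachable (delete_vertex H v) a b"
proof (cases "v \<in> verts H")
  case True then show ?thesis using assms unfolding nocut_def by blast
next
  case False
  have "reachable H a b" using assms unfolding connected_graph_def by blast
  then show ?thesis
    by (rule reachable_mono) (use False assms(1) in \<open>auto simp: subgraph_def\<close>)
qed

lemma conn_via:
  assumes "r \<in> verts H" "\<And>u. u \<in> verts H \<Longrightarrow> reachable H u r"
  shows "connected_graph H"
  unfolding connected_graph_def using assms by (auto intro: reachable_trans reachable_sym)

lemma nocut_via:
  assumes "\<And>v. v \<in> verts H \<Longrightarrow> \<exists>r\<in>verts H - {v}. \<forall>u\<in>verts H - {v}. reachable (delete_vertex H v) u r"
  shows "nocut H"
  unfolding nocut_def
proof (intro ballI)
  fix v a b assume v: "v \<in> verts H" and ab: "a \<in> verts H - {v}" "b \<in> verts H - {v}"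
  obtain r where r: "r \<in> verts H - {v}" "\<forall>u\<in>verts H - {v}. reachable (delete_vertex H v) u r"
    using assms[OF v] by blast
  then show "reachable (delete_vertex H v) a b" using ab by (meson reachable_sym reachable_trans)
qed

lemma ear:
  assumes fin: "finite (verts G)" and bp: "biconn_piece G H" and w: "walk G xs" "distinct xs"
    and ab: "hd xs \<in> verts H" "last xs \<in> verts H" "hd xs \<noteq> last xs"
  shows "biconn_piece G (verts H \<union> set xs, edges H \<union> pedges xs)"
proof -
  define K where "K = (verts H \<union> set xs, edges H \<union> pedges xs)"
  have VK: "verts K = verts H \<union> set xs" and EK: "edges K = edges H \<union> pedges xs" by (simp_all add: K_def)
  define a where "a = hd xs"
  define b where "b = last xs"
  have H: "subgraph H G" "connected_graph H" "nocut H" using bp bp_iff[OF fin] by auto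
  have xsne: "xs \<noteq> []" using w by auto
  have wp: "set xs \<subseteq> verts G" "pedges xs \<subseteq> edges G" using w by (auto simp: walk_pedges)
  have sub: "subgraph K G" using H(1) wp pedges_sub unfolding subgraph_def VK EK by blast
  have aK: "a \<in> verts K" using ab a_def VK by auto
  have conn: "connected_graph K"
  proof (rule conn_via[OF aK])
    fix u assume u: "u \<in> verts K"
    have "reachable K a u"
    proof (cases "u \<in> verts H")
      case True
      then have "reachable H a u" using H(2) ab a_def unfolding connected_graph_def by blast
      then show ?thesis by (rule reachable_mono) (simp_all add: VK EK)
    next
      case False
      then have "u \<in> set xs" using u VK by auto
      then show ?thesis unfolding a_def by (rule pgraph_reach_mono[OF w(1)]) (simp_all add: VK EK)
    qed
    then show "reachable K u a" by (rule reachable_sym)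
  qed
  have nc: "nocut K"
  proof (rule nocut_via)
    fix v assume v: "v \<in> verts K"
    have R1: "reachable (delete_vertex K v) u r" if "u \<in> verts H - {v}" "r \<in> verts H - {v}" for u r
    proof -
      have "reachable (delete_vertex H v) u r" using nocut_del[OF H that] .
      then show ?thesis by (rule reachable_mono) (auto simp: VK EK)
    qed
    have R2: "reachable (delete_vertex K v) (hd ys) u" if "walk G ys" "u \<in> set ys" "v \<notin> set ys"
      "pedges ys \<subseteq> pedges xs" "set ys \<subseteq> set xs" for ys u
    proof (rule pgraph_reach_mono[OF that(1,2)])
      show "set ys \<subseteq> verts (delete_vertex K v)" using that(3,5) VK by auto
      show "pedges ys \<subseteq> edges (delete_vertex K v)"
      proof
        fix e assume e: "e \<in> pedges ys"
        then have "v \<notin> e" using that(3) pedges_sub by blast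
        then show "e \<in> edges (delete_vertex K v)" using e that(4) EK by auto
      qed
    qed
    obtain r where r: "r \<in> {a,b}" "r \<noteq> v" using ab a_def b_def by auto
    have rH: "r \<in> verts H - {v}" using r ab a_def b_def by auto
    have "\<forall>u\<in>verts K - {v}. reachable (delete_vertex K v) u r"
    proof
      fix u assume u: "u \<in> verts K - {v}"
      show "reachable (delete_vertex K v) u r"
      proof (cases "u \<in> verts H")
        case True then show ?thesis using R1 u rH by auto
      next
        case False
        then have ux: "u \<in> set xs" using u VK by auto
        show ?thesis
        proof (cases "v \<in> set xs")
          case False
          have "reachable (delete_vertex K v) a u" unfolding a_def using R2[OF w(1) ux False order.refl order.refl] by simp
          moreover have "a \<in> verts H - {v}" using False ab a_def xsne by auto
          ultimately show ?thesis using R1 rH by (meson reachable_sym reachable_trans)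
        next
          case True
          then obtain ys zs where yz: "xs = ys @ v # zs" by (meson split_list)
          have dv: "v \<notin> set ys" "v \<notin> set zs" using w(2) yz by auto
          have pe1: "pedges ys \<subseteq> pedges xs" using yz pedges_append[of ys v zs] pedges_snoc[of ys v]
            by (cases "ys = []") auto
          have pe2: "pedges zs \<subseteq> pedges xs" using yz pedges_append[of ys v zs]
            by (cases zs) auto
          have sy: "set ys \<subseteq> set xs" and sz: "set zs \<subseteq> set xs" using yz by auto
          have "u \<in> set ys \<or> u \<in> set zs" using ux yz u by auto
          then show ?thesis
          proof
            assume uy: "u \<in> set ys"
            then have yne: "ys \<noteq> []" by auto
            have wy: "walk G ys" using w(1) yz walk_prefix yne by blast
            have hy: "hd ys = a" using yne yz a_def by simp
            have "reachable (delete_vertex K v) a u" using R2[OF wy uy dv(1) pe1 sy] hy by simp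
            moreover have "a \<in> verts H - {v}" using dv hy yne ab a_def by (metis DiffI hd_in_set singletonD)
            ultimately show ?thesis using R1 rH by (meson reachable_sym reachable_trans)
          next
            assume uz: "u \<in> set zs"
            then have zne: "zs \<noteq> []" by auto
            have wz: "walk G zs" using w(1) yz walk_suffix[of G "ys @ [v]" zs] zne by simp
            have lz: "last zs = b" using zne yz b_def by simp
            have "reachable (delete_vertex K v) (hd zs) u" using R2[OF wz uz dv(2) pe2 sz] .
            moreover have "reachable (delete_vertex K v) (hd zs) b" using R2[OF wz _ dv(2) pe2 sz] lz zne by auto
            moreover have "b \<in> verts H - {v}" using dv lz zne ab b_def by (metis DiffI last_in_set singletonD)
            ultimately show ?thesis using R1 rH by (meson reachable_sym reachable_trans)
          qed
        qed
      qed
    qed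
    moreover have "r \<in> verts K - {v}" using rH VK by auto
    ultimately show "\<exists>r\<in>verts K - {v}. \<forall>u\<in>verts K - {v}. reachable (delete_vertex K v) u r" by blast
  qed
  show ?thesis using sub conn nc bp_iff[OF fin] unfolding K_def by blast
qed

lemma union_bp:
  assumes fin: "finite (verts G)" and bp: "biconn_piece G H1" "biconn_piece G H2"
    and xy: "x \<in> verts H1" "x \<in> verts H2" "y \<in> verts H1" "y \<in> verts H2" "x \<noteq> y"
  shows "biconn_piece G (verts H1 \<union> verts H2, edges H1 \<union> edges H2)"
proof -
  define U where "U = (verts H1 \<union> verts H2, edges H1 \<union> edges H2)"
  have VU: "verts U = verts H1 \<union> verts H2" and EU: "edges U = edges H1 \<union> edges H2" by (simp_all add: U_def)
  have H1: "subgraph H1 G" "connected_graph H1" "nocut H1" using bp bp_iff[OF fin] by auto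
  have H2: "subgraph H2 G" "connected_graph H2" "nocut H2" using bp bp_iff[OF fin] by auto
  have sub: "subgraph U G" using H1(1) H2(1) unfolding subgraph_def VU EU by blast
  have m1: "reachable U a b" if "reachable H1 a b" for a b
    using that by (rule reachable_mono) (simp_all add: VU EU)
  have m2: "reachable U a b" if "reachable H2 a b" for a b
    using that by (rule reachable_mono) (simp_all add: VU EU)
  have conn: "connected_graph U"
  proof (rule conn_via[of x])
    show "x \<in> verts U" using xy VU by auto
    fix u assume "u \<in> verts U"
    then have "u \<in> verts H1 \<or> u \<in> verts H2" using VU by auto
    then show "reachable U u x"
    proof
      assume "u \<in> verts H1"
      then have "reachable H1 u x" using H1(2) xy unfolding connected_graph_def by blast
      then show ?thesis by (rule m1)
    next
      assume "u \<in> verts H2"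
      then have "reachable H2 u x" using H2(2) xy unfolding connected_graph_def by blast
      then show ?thesis by (rule m2)
    qed
  qed
  have nc: "nocut U"
  proof (rule nocut_via)
    fix v assume v: "v \<in> verts U"
    obtain c where c: "c \<in> verts H1" "c \<in> verts H2" "c \<noteq> v" using xy by blast
    have d1: "reachable (delete_vertex U v) a b" if "reachable (delete_vertex H1 v) a b" for a b
      using that by (rule reachable_mono) (auto simp add: VU EU)
    have d2: "reachable (delete_vertex U v) a b" if "reachable (delete_vertex H2 v) a b" for a b
      using that by (rule reachable_mono) (auto simp add: VU EU)
    have "\<forall>u\<in>verts U - {v}. reachable (delete_vertex U v) u c"
    proof
      fix u assume u: "u \<in> verts U - {v}"
      show "reachable (delete_vertex U v) u c"
      proof (cases "u \<in> verts H1")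
        case True
        then have "u \<in> verts H1 - {v}" "c \<in> verts H1 - {v}" using u c by auto
        then show ?thesis using nocut_del[OF H1] d1 by blast
      next
        case False
        then have "u \<in> verts H2 - {v}" "c \<in> verts H2 - {v}" using u c VU by auto
        then show ?thesis using nocut_del[OF H2] d2 by blast
      qed
    qed
    moreover have "c \<in> verts U - {v}" using c VU by auto
    ultimately show "\<exists>r\<in>verts U - {v}. \<forall>u\<in>verts U - {v}. reachable (delete_vertex U v) u r"
      by blast
  qed
  show ?thesis using sub conn nc bp_iff[OF fin] unfolding U_def by blast
qed

lemma subgraph_trans: "subgraph A B \<Longrightarrow> subgraph B C \<Longrightarrow> subgraph A C"
  unfolding subgraph_def by blast

lemma sgraph_eqI: "verts A = verts B \<Longrightarrow> edges A = edges B \<Longrightarrow> A = (B :: 'a sgraph)"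
  unfolding verts_def edges_def by (simp add: prod_eq_iff)

locale cgraph =
  fixes G :: "'a sgraph"
  assumes wf: "wf_graph G" and conn: "connected_graph G"
begin

lemma finV: "finite (verts G)" using wf by (simp add: wf_graph_def)

lemma edge2: "e \<in> edges G \<Longrightarrow> \<exists>x y. x \<noteq> y \<and> e = {x,y} \<and> x \<in> verts G \<and> y \<in> verts G"
  using wf by (simp add: wf_graph_def)

lemma finE: "finite (edges G)"
proof -
  have "edges G \<subseteq> Pow (verts G)" using edge2 by blast
  then show ?thesis using finV by (meson finite_Pow_iff finite_subset)
qed

lemma block_bp: "is_block G B \<Longrightarrow> biconn_piece G B" by (simp add: is_block_def)

lemma block_props: "is_block G B \<Longrightarrow> subgraph B G \<and> connected_graph B \<and> nocut B"
  using block_bp bp_iff[OF finV] by blast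

lemma block_ex:
  assumes "biconn_piece G H"
  shows "\<exists>B. is_block G B \<and> subgraph H B"
proof -
  define P where "P B \<longleftrightarrow> biconn_piece G B \<and> subgraph H B" for B
  define f where "f B = card (verts B) + card (edges B)" for B :: "'a sgraph"
  have fb: "f B < card (verts G) + card (edges G) + 1" if "P B" for B
  proof -
    have "subgraph B G" using that unfolding P_def biconn_piece_def by blast
    then have "card (verts B) \<le> card (verts G)" "card (edges B) \<le> card (edges G)"
      using finV finE by (auto simp: subgraph_def intro: card_mono)
    then show ?thesis unfolding f_def by simp
  qed
  have "P H" using assms unfolding P_def subgraph_def biconn_piece_def by blast
  then obtain B where B: "P B" "\<And>y. P y \<Longrightarrow> f y \<le> f B"
    using Lattices_Big.ex_has_greatest_nat[of P H f] fb by blast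
  have "is_block G B" unfolding is_block_def
  proof (intro conjI allI impI)
    show "biconn_piece G B" using B unfolding P_def by blast
    fix H' assume H': "biconn_piece G H' \<and> subgraph B H'"
    then have "P H'" using B(1) subgraph_trans unfolding P_def by blast
    then have le: "f H' \<le> f B" using B by blast
    have sg: "subgraph H' G" using H' unfolding biconn_piece_def by blast
    have fin': "finite (verts H')" "finite (edges H')"
      using sg finV finE by (auto simp: subgraph_def intro: finite_subset)
    have s: "verts B \<subseteq> verts H'" "edges B \<subseteq> edges H'" using H' unfolding subgraph_def by auto
    have c1: "card (verts B) \<le> card (verts H')" "card (edges B) \<le> card (edges H')"
      using s fin' by (auto intro: card_mono)
    then have "card (verts B) = card (verts H')" "card (edges B) = card (edges H')"
      using le unfolding f_def by linarith+
    then have "verts B = verts H'" "edges B = edges H'"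
      using card_subset_eq[OF fin'(1) s(1)] card_subset_eq[OF fin'(2) s(2)] by auto
    then show "H' = B" by (intro sgraph_eqI) auto
  qed
  then show ?thesis using B unfolding P_def by blast
qed

lemma vertex_bp: "u \<in> verts G \<Longrightarrow> biconn_piece G ({u}, {})"
  unfolding bp_iff[OF finV] subgraph_def nocut_def connected_graph_def
  by (auto intro: reachable_refl)

lemma edge_bp:
  assumes "{a,b} \<in> edges G" "a \<noteq> b"
  shows "biconn_piece G ({a,b}, {{a,b}})"
proof -
  have ab: "a \<in> verts G" "b \<in> verts G" using edge2[OF assms(1)] assms(2) by (auto simp: doubleton_eq_iff)
  have "reachable ({a,b}, {{a,b}}) x y" if "x \<in> {a,b}" "y \<in> {a,b}" for x y
  proof -
    have "reachable ({a,b}, {{a,b}}) a b" by (rule reachable_edge) auto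
    then show ?thesis using that by (auto intro: reachable_sym reachable_refl)
  qed
  moreover have "reachable (delete_vertex ({a,b}, {{a,b}}) v) x y"
    if "v \<in> {a,b}" "x \<in> {a,b} - {v}" "y \<in> {a,b} - {v}" for v x y
  proof -
    have "x = y" using that by auto
    then show ?thesis using that by (auto intro: reachable_refl)
  qed
  ultimately show ?thesis
    unfolding bp_iff[OF finV] subgraph_def nocut_def connected_graph_def using assms ab by auto
qed

lemma vertex_block: "u \<in> verts G \<Longrightarrow> \<exists>B. is_block G B \<and> u \<in> verts B"
  using block_ex[OF vertex_bp] unfolding subgraph_def by fastforce

lemma edge_block:
  assumes "{a,b} \<in> edges G" shows "\<exists>B. is_block G B \<and> a \<in> verts B \<and> b \<in> verts B"
proof (cases "a = b")
  case True
  then show ?thesis using edge2[OF assms] by (auto simp: doubleton_eq_iff)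
next
  case False
  then show ?thesis using block_ex[OF edge_bp[OF assms False]] unfolding subgraph_def by fastforce
qed

lemma block_inter:
  assumes B: "is_block G B1" "is_block G B2" and xy: "x \<in> verts B1" "x \<in> verts B2" "y \<in> verts B1" "y \<in> verts B2" "x \<noteq> y"
  shows "B1 = B2"
proof -
  define U where "U = (verts B1 \<union> verts B2, edges B1 \<union> edges B2)"
  have "biconn_piece G U" unfolding U_def by (rule union_bp[OF finV block_bp[OF B(1)] block_bp[OF B(2)] xy])
  moreover have "subgraph B1 U" "subgraph B2 U" using block_props[OF B(1)] block_props[OF B(2)]
    unfolding U_def subgraph_def by auto
  ultimately have "U = B1" "U = B2" using B unfolding is_block_def by blast+
  then show ?thesis by simp
qed

lemma block_conn_del:
  assumes "is_block G B" "a \<in> verts B - {v}" "b \<in> verts B - {v}"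
  shows "reachable (delete_vertex G v) a b"
proof -
  have p: "subgraph B G" "connected_graph B" "nocut B" using block_props[OF assms(1)] by auto
  have "reachable (delete_vertex B v) a b" by (rule nocut_del[OF p assms(2,3)])
  moreover have "verts (delete_vertex B v) \<subseteq> verts (delete_vertex G v)"
    "edges (delete_vertex B v) \<subseteq> edges (delete_vertex G v)" using p(1) unfolding subgraph_def by auto
  ultimately show ?thesis by (rule reachable_mono)
qed

lemma key:
  assumes B: "is_block G B1" "is_block G B2" "B1 \<noteq> B2" and v: "v \<in> verts B1" "v \<in> verts B2"
    and a: "a \<in> verts B1 - {v}" and b: "b \<in> verts B2 - {v}"
  shows "\<not> reachable (delete_vertex G v) a b"
proof
  assume r: "reachable (delete_vertex G v) a b"
  have inter: "x = v" if "x \<in> verts B1" "x \<in> verts B2" for x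
  proof (rule ccontr)
    assume "x \<noteq> v"
    then have "B1 = B2" by (rule block_inter[OF B(1,2) that v])
    then show False using B(3) by simp
  qed
  obtain xs where xs: "walk (delete_vertex G v) xs" "distinct xs" "hd xs = a" "last xs = b"
    using reachable_distinct[OF r] by blast
  have "xs \<noteq> []" using xs(1) by auto
  then have "b \<in> set xs" using xs(4) by auto
  then have "\<exists>x\<in>set xs. x \<in> verts B2" using b by blast
  from split_list_first_prop[OF this]
  obtain ys c zs where yz: "xs = ys @ c # zs" "c \<in> verts B2" "\<forall>y\<in>set ys. y \<notin> verts B2"
    by blast
  have aB2: "a \<notin> verts B2"
  proof
    assume "a \<in> verts B2"
    then have "a = v" using inter[of a] a by simp
    then show False using a by simp
  qed
  have yne: "ys \<noteq> []"
  proof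
    assume "ys = []"
    then have "a = c" using yz(1) xs(3) by simp
    then show False using aB2 yz(2) by simp
  qed
  have "walk (delete_vertex G v) ((ys @ [c]) @ zs)" using xs(1) yz(1) by simp
  then have w1: "walk (delete_vertex G v) (ys @ [c])" by (rule walk_prefix) simp
  have cv: "c \<noteq> v" using w1 by (auto simp: walk_pedges)
  have wG1: "walk G (ys @ [c])" using w1 by (rule walk_mono) auto
  have wys: "walk G ys" using walk_prefix[OF wG1 yne] .
  have "pedges (ys @ [c]) \<subseteq> edges G" using wG1 by (simp add: walk_pedges)
  then have elast: "{last ys, c} \<in> edges G" using pedges_snoc[OF yne, of c] by simp
  have cB2: "connected_graph B2" using block_props[OF B(2)] by simp
  have "reachable B2 c v" using cB2 yz(2) v(2) unfolding connected_graph_def by simp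
  from reachable_distinct[OF this]
  obtain rs where rs: "walk B2 rs" "distinct rs" "hd rs = c" "last rs = v" by blast
  have sB2: "subgraph B2 G" using block_props[OF B(2)] by simp
  have wrs: "walk G rs" using rs(1) by (rule walk_mono) (use sB2 in \<open>auto simp: subgraph_def\<close>)
  have srs: "set rs \<subseteq> verts B2" using rs(1) by (auto simp: walk_pedges)
  have rne: "rs \<noteq> []" using rs by auto
  define p where "p = ys @ rs"
  have wp: "walk G p" unfolding p_def by (rule walk_app[OF wys wrs]) (use elast rs(3) in simp)
  have dys: "distinct ys" using xs(2) yz(1) by simp
  have disj: "set ys \<inter> set rs = {}" using yz(3) srs by blast
  have dp: "distinct p" unfolding p_def using dys rs(2) disj by simp
  have hp: "hd p = a" using yne xs(3) yz(1) unfolding p_def by simp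
  have lp: "last p = v" using rne rs(4) unfolding p_def by simp
  have "biconn_piece G (verts B1 \<union> set p, edges B1 \<union> pedges p)"
  proof (rule ear[OF finV block_bp[OF B(1)] wp dp])
    show "hd p \<in> verts B1" using hp a by simp
    show "last p \<in> verts B1" using lp v by simp
    show "hd p \<noteq> last p" using hp lp a by simp
  qed
  moreover have "subgraph B1 (verts B1 \<union> set p, edges B1 \<union> pedges p)"
    by (simp add: subgraph_def) (use block_props[OF B(1)] in \<open>auto simp: subgraph_def\<close>)
  ultimately have "(verts B1 \<union> set p, edges B1 \<union> pedges p) = B1" using B(1) unfolding is_block_def by blast
  then have "verts (verts B1 \<union> set p, edges B1 \<union> pedges p) = verts B1" by (rule arg_cong)
  then have "verts B1 \<union> set p = verts B1" by (simp only: verts_pair)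
  then have "set p \<subseteq> verts B1" by blast
  moreover have "c \<in> set p" using rs(3) rne unfolding p_def by auto
  ultimately show False using inter[of c] yz(2) cv by blast
qed

lemma no_loop: "{v} \<notin> edges G"
proof
  assume "{v} \<in> edges G"
  then obtain x y where xy: "x \<noteq> y" "{v} = {x,y}" using edge2 by blast
  then have "x \<in> {v}" "y \<in> {v}" by auto
  then show False using xy(1) by simp
qed

lemma edge_sub_single: "e \<in> edges G \<Longrightarrow> e \<subseteq> {v} \<Longrightarrow> False"
proof -
  assume e: "e \<in> edges G" "e \<subseteq> {v}"
  then obtain x y where "x \<noteq> y" "e = {x,y}" using edge2 by blast
  then show False using e(2) by auto
qed

lemma block_other:
  assumes B: "is_block G B" and two: "2 \<le> card (verts G)"
  shows "\<exists>a\<in>verts B. a \<noteq> v"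
proof (rule ccontr)
  assume "\<not> (\<exists>a\<in>verts B. a \<noteq> v)"
  then have sub: "verts B \<subseteq> {v}" by auto
  have bp: "subgraph B G" "connected_graph B" "nocut B" using block_props[OF B] by auto
  have "verts B \<noteq> {}" using bp(2) unfolding connected_graph_def by simp
  then have vB: "verts B = {v}" using sub by auto
  have eB: "edges B = {}"
  proof -
    have "e \<notin> edges B" for e
    proof
      assume e: "e \<in> edges B"
      then have "e \<subseteq> {v}" "e \<in> edges G" using bp(1) vB unfolding subgraph_def by auto
      then show False using edge_sub_single by blast
    qed
    then show ?thesis by auto
  qed
  have vG: "v \<in> verts G" using bp(1) vB unfolding subgraph_def by auto
  have "verts G \<noteq> {v}" using two by auto
  then obtain w where w: "w \<in> verts G" "w \<noteq> v" using vG by blast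
  have "reachable G v w" using conn vG w unfolding connected_graph_def by simp
  then have "(v, w) \<in> (adj G)\<^sup>*" by (simp add: reachable_iff)
  then obtain u where "(v,u) \<in> adj G" using w(2) by (metis converse_rtranclE)
  then have vu0: "{v,u} \<in> edges G" by (simp add: adj_def)
  have vu1: "v \<noteq> u"
  proof
    assume "v = u" then show False using vu0 no_loop[of v] by simp
  qed
  have "biconn_piece G ({v,u}, {{v,u}})" by (rule edge_bp[OF vu0 vu1])
  moreover have "subgraph B ({v,u}, {{v,u}})" using vB eB unfolding subgraph_def by auto
  ultimately have "({v,u}, {{v,u}}) = B" using B unfolding is_block_def by blast
  then have "verts ({v,u}, {{v,u}}) = verts B" by (rule arg_cong)
  then have "verts B = {v,u}" by (simp only: verts_pair)
  then have "u \<in> verts B" by simp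
  then show False using vB vu1 by simp
qed

lemma block_unique_small:
  assumes "card (verts G) < 2" "is_block G B1" "is_block G B2"
  shows "B1 = B2"
proof -
  have ne: "verts G \<noteq> {}" using conn unfolding connected_graph_def by blast
  then have "0 < card (verts G)" using finV by (simp add: card_gt_0_iff)
  then have "card (verts G) = 1" using assms(1) by linarith
  then obtain u where vG: "verts G = {u}" by (rule card_1_singletonE)
  have noe: "edges G = {}" using edge_sub_single[of _ u] edge2 vG by fastforce
  have "verts B = {u} \<and> edges B = {}" if "is_block G B" for B
  proof -
    have p: "subgraph B G" "connected_graph B" using block_props[OF that] by auto
    then have "verts B \<noteq> {}" "verts B \<subseteq> {u}" "edges B = {}"
      using vG noe unfolding subgraph_def connected_graph_def by auto
    then show ?thesis by auto
  qed
  then have "verts B1 = verts B2" "edges B1 = edges B2" using assms(2,3) by auto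
  then show ?thesis by (rule sgraph_eqI)
qed

lemma shared_cut:
  assumes B: "is_block G B1" "is_block G B2" "B1 \<noteq> B2" and u: "u \<in> verts B1" "u \<in> verts B2"
  shows "cut_vertex G u"
proof -
  have two: "2 \<le> card (verts G)"
  proof (rule ccontr)
    assume "\<not> 2 \<le> card (verts G)"
    then have "B1 = B2" using block_unique_small B(1,2) by simp
    then show False using B(3) by simp
  qed
  obtain a where a: "a \<in> verts B1" "a \<noteq> u" using block_other[OF B(1) two] by blast
  obtain b where b: "b \<in> verts B2" "b \<noteq> u" using block_other[OF B(2) two] by blast
  have nr: "\<not> reachable (delete_vertex G u) a b" using key[OF B u] a b by simp
  have s: "verts B1 \<subseteq> verts G" "verts B2 \<subseteq> verts G"
    using block_props[OF B(1)] block_props[OF B(2)] by (auto simp: subgraph_def)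
  have "u \<in> verts G" "a \<in> verts G - {u}" "b \<in> verts G - {u}" using s a b u by auto
  then show ?thesis unfolding cut_vertex_iff[OF finV conn] using nr by blast
qed

end

locale wtree =
  fixes T :: "'b sgraph" and w :: "'b \<Rightarrow> nat" and n :: nat
  assumes finT: "finite (verts T)"
  and neT: "verts T \<noteq> {}"
  and wfT: "\<And>e. e \<in> edges T \<Longrightarrow> \<exists>x y. x \<noteq> y \<and> e = {x,y} \<and> x \<in> verts T \<and> y \<in> verts T"
  and connT: "\<And>x y. x \<in> verts T \<Longrightarrow> y \<in> verts T \<Longrightarrow> reachable T x y"
  and acyc: "\<And>x y. {x,y} \<in> edges T \<Longrightarrow> \<not> reachable (verts T, edges T - {{x,y}}) y x"
  and tot: "set_weight w (verts T) = n"
  and npos: "0 < n"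
  and q1: "\<And>x y. {x,y} \<in> edges T \<Longrightarrow> 0 < w x \<or> 0 < w y"
begin

abbreviation V where "V \<equiv> verts T"
abbreviation E where "E \<equiv> edges T"
definition Te where "Te x y = (V, E - {{x,y}})"
definition Sd where "Sd x y = side_of_edge T {x,y} y"
definition W where "W S = set_weight w S"
definition cp where "cp x z = {u \<in> V - {x}. reachable (delete_vertex T x) z u}"

lemma Te_sym: "Te x y = Te y x" unfolding Te_def by (simp add: insert_commute)
lemma verts_Te[simp]: "verts (Te x y) = V" by (simp add: Te_def)
lemma edges_Te[simp]: "edges (Te x y) = E - {{x,y}}" by (simp add: Te_def)

lemma Sd_def2: "Sd x y = {z \<in> V. reachable (Te x y) y z}"
  unfolding Sd_def side_of_edge_def Te_def by simp
lemma Sd_def3: "Sd y x = {z \<in> V. reachable (Te x y) x z}"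
  unfolding Sd_def2 using Te_sym by simp

lemma edge_props: "{x,y} \<in> E \<Longrightarrow> x \<noteq> y \<and> x \<in> V \<and> y \<in> V"
proof -
  assume e: "{x,y} \<in> E"
  then obtain a b where ab: "a \<noteq> b" "{x,y} = {a,b}" "a \<in> V" "b \<in> V" using wfT by blast
  then show ?thesis by (auto simp: doubleton_eq_iff)
qed

lemma Sd_sub: "Sd x y \<subseteq> V" unfolding Sd_def2 by auto

lemma Sd_in: "{x,y} \<in> E \<Longrightarrow> y \<in> Sd x y"
  unfolding Sd_def2 using edge_props by (auto intro: reachable_refl)

lemma Sd_notin: "{x,y} \<in> E \<Longrightarrow> x \<notin> Sd x y"
  unfolding Sd_def2 Te_def using acyc by auto

lemma Sd_disj: assumes "{x,y} \<in> E" shows "Sd x y \<inter> Sd y x = {}"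
proof (rule ccontr)
  assume "Sd x y \<inter> Sd y x \<noteq> {}"
  then obtain z where "reachable (Te x y) y z" "reachable (Te x y) x z"
    unfolding Sd_def2[of x y] Sd_def3[where x=x and y=y] by blast
  then have "reachable (Te x y) y x" by (meson reachable_sym reachable_trans)
  then show False using acyc[OF assms] unfolding Te_def by simp
qed

lemma Sd_cover: assumes e: "{x,y} \<in> E" shows "Sd x y \<union> Sd y x = V"
proof
  show "Sd x y \<union> Sd y x \<subseteq> V" using Sd_sub by auto
  show "V \<subseteq> Sd x y \<union> Sd y x"
  proof
    fix z assume z: "z \<in> V"
    have xV: "x \<in> V" using edge_props[OF e] by simp
    have r: "reachable T x z" using connT[OF xV z] .
    show "z \<in> Sd x y \<union> Sd y x"
      using r
    proof (induction rule: reachable_induct)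
      case base then show ?case using Sd_in[of y x] e by (simp add: insert_commute)
    next
      case (step a b)
      show ?case
      proof (cases "{a,b} = {x,y}")
        case True
        then have "b = x \<or> b = y" by (auto simp: doubleton_eq_iff)
        then show ?thesis using Sd_in[OF e] Sd_in[of y x] e by (auto simp: insert_commute)
      next
        case False
        then have "reachable (Te x y) a b" using step by (intro reachable_edge) auto
        then show ?thesis using step.IH unfolding Sd_def2[of x y] Sd_def3[where x=x and y=y]
          using reachable_in[OF \<open>reachable (Te x y) a b\<close>] by (auto intro: reachable_trans)
      qed
    qed
  qed
qed

lemma avoid:
  assumes "reachable (V, E - F) s u" "\<And>z. reachable (V, E - F) s z \<Longrightarrow> z \<noteq> x"
  shows "reachable (delete_vertex T x) s u"
  using assms(1)
proof (induction rule: reachable_induct)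
  case base
  have sV: "s \<in> V" using reachable_in[OF assms(1)] by simp
  then have "reachable (V, E - F) s s" by (intro reachable_refl) simp
  then have "s \<noteq> x" by (rule assms(2))
  note sV this
  then show ?case by (intro reachable_refl) simp
next
  case (step a b)
  have "a \<noteq> x" using assms(2)[OF step(1)] .
  have "reachable (V, E - F) a b" by (rule reachable_edge[OF step.hyps(2-4)])
  with step(1) have "reachable (V, E - F) s b" by (rule reachable_trans)
  then have "b \<noteq> x" using assms(2) by blast
  then have "reachable (delete_vertex T x) a b" using step \<open>a \<noteq> x\<close> by (intro reachable_edge) auto
  with step.IH show ?case by (rule reachable_trans)
qed

lemma cp_Sd: assumes e: "{x,y} \<in> E" shows "cp x y = Sd x y"
proof
  show "cp x y \<subseteq> Sd x y"
  proof
    fix z assume "z \<in> cp x y"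
    then have z: "z \<in> V" "reachable (delete_vertex T x) y z" unfolding cp_def by auto
    have "reachable (Te x y) y z" using z(2) by (rule reachable_mono) auto
    then show "z \<in> Sd x y" unfolding Sd_def2 using z by simp
  qed
  show "Sd x y \<subseteq> cp x y"
  proof
    fix z assume z: "z \<in> Sd x y"
    have "reachable (V, E - {{x,y}}) y z" using z unfolding Sd_def2 Te_def by simp
    moreover have "z' \<noteq> x" if "reachable (V, E - {{x,y}}) y z'" for z'
    proof -
      have "z' \<in> Sd x y" using that reachable_in[OF that] unfolding Sd_def2 Te_def by simp
      then show ?thesis using Sd_notin[OF e] by auto
    qed
    ultimately have "reachable (delete_vertex T x) y z" by (rule avoid)
    then show "z \<in> cp x y" unfolding cp_def using z Sd_sub Sd_notin[OF e] by auto
  qed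
qed

lemma cp_eq: "reachable (delete_vertex T x) z z' \<Longrightarrow> cp x z = cp x z'"
  unfolding cp_def by (auto intro: reachable_trans reachable_sym)

lemma subtrees_cp: "subtrees_of T x = cp x ` (V - {x})"
  unfolding subtrees_of_def components_def cp_def by simp

lemma fin_subtrees: "finite (subtrees_of T x)" unfolding subtrees_cp using finT by simp

lemma subtree_Sd:
  assumes x: "x \<in> V" and K: "K \<in> subtrees_of T x"
  shows "\<exists>y. {x,y} \<in> E \<and> K = Sd x y"
proof -
  obtain z where z: "z \<in> V - {x}" "K = cp x z" using K unfolding subtrees_cp by blast
  obtain xs where xs: "walk T xs" "distinct xs" "hd xs = z" "last xs = x"
    using reachable_distinct[OF connT[of z x]] z x by blast
  have "x \<in> set xs" using xs by (metis last_in_set walk_Nil)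
  then obtain ys zs where yz: "xs = ys @ x # zs" "x \<notin> set ys" by (meson split_list_first)
  have yne: "ys \<noteq> []" using yz xs(3) z(1) by (cases ys) auto
  have "walk T ((ys @ [x]) @ zs)" using xs(1) yz(1) by simp
  then have w1: "walk T (ys @ [x])" by (rule walk_prefix) simp
  have wys: "walk T ys" using walk_prefix[OF w1 yne] .
  have pe: "pedges (ys @ [x]) \<subseteq> E" using w1 by (simp add: walk_pedges)
  have el: "{last ys, x} \<in> E" using pe pedges_snoc[OF yne, of x] by simp
  have "walk (delete_vertex T x) ys"
    unfolding walk_pedges using wys yz(2) pedges_sub[of _ ys] by (auto simp: walk_pedges)
  then have "reachable (delete_vertex T x) z (last ys)"
    using walk_reachable yne yz(1) xs(3) by fastforce
  then have "K = cp x (last ys)" using z(2) cp_eq by blast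
  also have "\<dots> = Sd x (last ys)" using cp_Sd el by (simp add: insert_commute)
  finally show ?thesis using el by (auto simp: insert_commute)
qed

lemma Sd_subtree: assumes e: "{x,y} \<in> E" shows "Sd x y \<in> subtrees_of T x"
proof -
  have "y \<in> V - {x}" using edge_props[OF e] by auto
  then show ?thesis unfolding subtrees_cp using cp_Sd[OF e] by (metis image_eqI)
qed

lemma Sd_disj2:
  assumes e: "{x,y} \<in> E" "{x,z} \<in> E" and yz: "y \<noteq> z"
  shows "Sd x y \<inter> Sd x z = {}"
proof (rule ccontr)
  assume "Sd x y \<inter> Sd x z \<noteq> {}"
  then obtain u where u: "u \<in> cp x y" "u \<in> cp x z" using cp_Sd[OF e(1)] cp_Sd[OF e(2)] by auto
  have r0: "reachable (delete_vertex T x) y u" "reachable (delete_vertex T x) z u" using u unfolding cp_def by auto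
  have "reachable (delete_vertex T x) y z" using r0(1) reachable_sym[OF r0(2)] by (rule reachable_trans)
  then have r1: "reachable (Te x y) y z" by (rule reachable_mono) auto
  have xy: "x \<noteq> y" "x \<noteq> z" using edge_props[OF e(1)] edge_props[OF e(2)] by auto
  have ne: "{z,x} \<noteq> {x,y}"
  proof
    assume "{z,x} = {x,y}"
    then have "z \<in> {x,y}" by blast
    then show False using xy yz by auto
  qed
  have "{z,x} \<in> E" using e(2) by (simp add: insert_commute)
  then have "{z,x} \<in> edges (Te x y)" using ne by simp
  then have "reachable (Te x y) z x" using edge_props[OF e(2)] by (intro reachable_edge) auto
  then have "reachable (Te x y) y x" using r1 by (rule reachable_trans[rotated])
  then show False using acyc[OF e(1)] unfolding Te_def by simp
qed

lemma subtree_sub: "x \<in> V \<Longrightarrow> K \<in> subtrees_of T x \<Longrightarrow> K \<subseteq> V - {x}"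
  using subtree_Sd Sd_sub Sd_notin by blast

lemma W_union: "finite A \<Longrightarrow> finite B \<Longrightarrow> A \<inter> B = {} \<Longrightarrow> W (A \<union> B) = W A + W B"
  unfolding W_def set_weight_def by (rule sum.union_disjoint)

lemma W_mono: "A \<subseteq> B \<Longrightarrow> finite B \<Longrightarrow> W A \<le> W B"
  unfolding W_def set_weight_def by (rule sum_mono2) auto

lemma W_V: "W V = n" using tot unfolding W_def by simp

lemma finSd: "finite (Sd x y)" using Sd_sub finT finite_subset by blast

lemma W_Sd_sum: assumes e: "{x,y} \<in> E" shows "W (Sd x y) + W (Sd y x) = n"
  using W_union[OF finSd finSd Sd_disj[OF e]] Sd_cover[OF e] W_V by simp

lemma W_minus: "x \<in> A \<Longrightarrow> finite A \<Longrightarrow> W (A - {x}) = W A - w x"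
  unfolding W_def set_weight_def by (simp add: sum_diff1_nat)

lemma W_elem: "x \<in> A \<Longrightarrow> finite A \<Longrightarrow> w x \<le> W A"
  unfolding W_def set_weight_def by (rule member_le_sum) auto

lemma hs_ge: "K \<in> subtrees_of T x \<Longrightarrow> W K \<le> hs T w x"
  unfolding hs_def W_def using fin_subtrees by (intro Max_ge) auto

lemma hs_le: "(\<And>K. K \<in> subtrees_of T x \<Longrightarrow> W K \<le> M) \<Longrightarrow> hs T w x \<le> M"
  unfolding hs_def W_def using fin_subtrees by (subst Max_le_iff) auto

lemma hs_att: "0 < hs T w x \<Longrightarrow> \<exists>K\<in>subtrees_of T x. W K = hs T w x"
proof -
  assume p: "0 < hs T w x"
  have "hs T w x \<in> insert 0 (set_weight w ` subtrees_of T x)"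
    unfolding hs_def using fin_subtrees by (intro Max_in) auto
  then show ?thesis using p unfolding W_def by auto
qed

lemma hs_Sd: "{x,y} \<in> E \<Longrightarrow> W (Sd x y) \<le> hs T w x"
  using hs_ge Sd_subtree by blast

lemma HB: assumes e: "{c,y} \<in> E" and K: "K \<in> subtrees_of T y"
  shows "K = Sd y c \<or> K \<subseteq> Sd c y - {y}"
proof -
  have e': "{y,c} \<in> E" using e by (simp add: insert_commute)
  have yV: "y \<in> V" using edge_props[OF e] by simp
  obtain z where z: "{y,z} \<in> E" "K = Sd y z" using subtree_Sd[OF yV K] by blast
  show ?thesis
  proof (cases "z = c")
    case True then show ?thesis using z by simp
  next
    case False
    have "K \<inter> Sd y c = {}" using Sd_disj2[OF z(1) e' False] z by simp
    moreover have "K \<subseteq> V - {y}" using subtree_sub[OF yV K] .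
    ultimately show ?thesis using Sd_cover[OF e] by blast
  qed
qed

lemma HBW: assumes e: "{c,y} \<in> E"
  shows "hs T w y \<le> max (n - W (Sd c y)) (W (Sd c y) - w y)"
proof (rule hs_le)
  fix K assume K: "K \<in> subtrees_of T y"
  have s: "W (Sd y c) = n - W (Sd c y)" using W_Sd_sum[OF e] by simp
  have m: "W (Sd c y - {y}) = W (Sd c y) - w y" using W_minus[OF Sd_in[OF e] finSd] .
  from HB[OF e K] show "W K \<le> max (n - W (Sd c y)) (W (Sd c y) - w y)"
  proof
    assume "K = Sd y c" then show ?thesis using s by simp
  next
    assume "K \<subseteq> Sd c y - {y}"
    then have "W K \<le> W (Sd c y - {y})" using finSd by (intro W_mono) auto
    then show ?thesis using m by simp
  qed
qed

end

context wtree begin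

definition m where "m = Min (hs T w ` V)"

lemma m_le: "y \<in> V \<Longrightarrow> m \<le> hs T w y"
  unfolding m_def using finT by (intro Min_le) auto

lemma m_in: "\<exists>c\<in>V. hs T w c = m"
proof -
  have "m \<in> hs T w ` V" unfolding m_def using finT neT by (intro Min_in) auto
  then show ?thesis by auto
qed

lemma cent_iff: "centroid T w x \<longleftrightarrow> x \<in> V \<and> hs T w x = m"
proof
  assume c: "centroid T w x"
  obtain c0 where "c0 \<in> V" "hs T w c0 = m" using m_in by blast
  then show "x \<in> V \<and> hs T w x = m" using c m_le unfolding centroid_def by (metis le_antisym)
next
  assume "x \<in> V \<and> hs T w x = m"
  then show "centroid T w x" unfolding centroid_def using m_le by auto
qed

lemma cents: "centroids T w = {x \<in> V. hs T w x = m}"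
  unfolding centroids_def using cent_iff by auto

lemma cp_in: "z \<in> V - {x} \<Longrightarrow> cp x z \<in> subtrees_of T x"
  unfolding subtrees_cp by blast

lemma cp_self: "z \<in> V - {x} \<Longrightarrow> z \<in> cp x z"
  unfolding cp_def by (auto intro: reachable_refl)

lemma finCp: "finite (cp x z)" unfolding cp_def using finT by simp

lemma side_in_cp:
  assumes e: "{c,y} \<in> E" and x: "x \<in> Sd c y"
  shows "Sd y c \<subseteq> cp x c"
proof
  fix u assume u: "u \<in> Sd y c"
  have xc: "x \<notin> Sd y c" using x Sd_disj[OF e] by blast
  have r: "reachable (V, E - {{c,y}}) c u" using u unfolding Sd_def3[where x=c and y=y] Te_def by simp
  have "z \<noteq> x" if "reachable (V, E - {{c,y}}) c z" for z
  proof -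
    have "z \<in> Sd y c" unfolding Sd_def3[where x=c and y=y] Te_def using that reachable_in[OF that] by simp
    then show ?thesis using xc by auto
  qed
  then have "reachable (delete_vertex T x) c u" using r avoid by blast
  then show "u \<in> cp x c" unfolding cp_def using reachable_in by fastforce
qed

lemma notcentA:
  assumes c: "centroid T w c" and x: "x \<in> V" "x \<noteq> c"
  shows "n - m \<le> hs T w x"
proof -
  have cV: "c \<in> V" and hc: "hs T w c = m" using c cent_iff by auto
  have K: "cp c x \<in> subtrees_of T c" using x by (intro cp_in) auto
  obtain y where y: "{c,y} \<in> E" "cp c x = Sd c y" using subtree_Sd[OF cV K] by blast
  have xs: "x \<in> Sd c y" using cp_self[of x c] x y(2) by auto
  have s: "Sd y c \<subseteq> cp x c" using side_in_cp[OF y(1) xs] .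
  have "W (Sd y c) \<le> W (cp x c)" using s finCp by (intro W_mono)
  also have "\<dots> \<le> hs T w x" using cp_in[of c x] cV x by (intro hs_ge) auto
  finally have a: "W (Sd y c) \<le> hs T w x" .
  have "W (Sd c y) \<le> m" using hs_Sd[OF y(1)] hc by simp
  then show ?thesis using a W_Sd_sum[OF y(1)] by linarith
qed

lemma caseA:
  assumes c: "centroid T w c" and lt: "2 * m < n"
  shows "centroids T w = {c}"
proof -
  have eqc: "x = c" if "centroid T w x" for x
  proof (rule ccontr)
    assume "x \<noteq> c"
    have xV: "x \<in> V" and hx: "hs T w x = m" using that cent_iff by auto
    have "n - m \<le> hs T w x" using notcentA[OF c xV \<open>x \<noteq> c\<close>] .
    then show False using hx lt by linarith
  qed
  show ?thesis
  proof (intro equalityI subsetI)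
    fix x assume "x \<in> centroids T w"
    then have "centroid T w x" unfolding centroids_def by simp
    then show "x \<in> {c}" using eqc by simp
  next
    fix x assume "x \<in> {c}"
    then show "x \<in> centroids T w" using c unfolding centroids_def by simp
  qed
qed

lemma heavy_cent:
  assumes e: "{a,z} \<in> E" and nm: "2 * m = n" and Wz: "W (Sd a z) = m"
  shows "centroid T w z"
proof -
  have "hs T w z \<le> max (n - W (Sd a z)) (W (Sd a z) - w z)" using HBW[OF e] .
  then have "hs T w z \<le> m" using nm Wz by simp
  moreover have "z \<in> V" using edge_props[OF e] by simp
  ultimately show ?thesis using m_le cent_iff by (metis le_antisym)
qed

lemma caseB:
  assumes c: "centroid T w c" and ge: "n \<le> 2 * m"
  shows "2 * m = n \<and> (\<exists>y. {c,y} \<in> E \<and> W (Sd c y) = m)"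
proof -
  have cV: "c \<in> V" and hc: "hs T w c = m" using c cent_iff by auto
  have mpos: "0 < m" using ge npos by linarith
  obtain K where K: "K \<in> subtrees_of T c" "W K = m" using hs_att[of c] hc mpos by auto
  obtain y where y: "{c,y} \<in> E" "K = Sd c y" using subtree_Sd[OF cV K(1)] by blast
  have Wy: "W (Sd c y) = m" using K y by simp
  have "2 * m = n"
  proof (rule ccontr)
    assume "2 * m \<noteq> n"
    then have gt: "n < 2 * m" using ge by simp
    have yV: "y \<in> V" using edge_props[OF y(1)] by simp
    have hy: "m \<le> hs T w y" using m_le[OF yV] .
    obtain K2 where K2: "K2 \<in> subtrees_of T y" "W K2 = hs T w y" using hs_att[of y] hy mpos by auto
    from HB[OF y(1) K2(1)] show False
    proof
      assume "K2 = Sd y c"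
      then have "W K2 = n - m" using W_Sd_sum[OF y(1)] Wy by simp
      then show False using K2 hy gt by simp
    next
      assume sub: "K2 \<subseteq> Sd c y - {y}"
      have "W K2 \<le> W (Sd c y - {y})" using sub finSd by (intro W_mono) auto
      also have "\<dots> = m - w y" using W_minus[OF Sd_in[OF y(1)] finSd] Wy by simp
      finally have le: "W K2 \<le> m - w y" .
      then have "m \<le> m - w y" using K2 hy by simp
      then have wy: "w y = 0" using mpos by arith
      have WK2: "W K2 = m" using le wy K2 hy by simp
      obtain z where z: "{y,z} \<in> E" "K2 = Sd y z" using subtree_Sd[OF yV K2(1)] by blast
      have wz: "0 < w z" using q1[OF z(1)] wy by simp
      have "hs T w z \<le> max (n - W (Sd y z)) (W (Sd y z) - w z)" using HBW[OF z(1)] .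
      moreover have "W (Sd y z) = m" using WK2 z(2) by simp
      ultimately have "hs T w z \<le> max (n - m) (m - w z)" by simp
      moreover have "n - m < m" "m - w z < m" using gt wz mpos by auto
      ultimately have "hs T w z < m" by linarith
      moreover have "z \<in> V" using edge_props[OF z(1)] by simp
      ultimately show False using m_le[of z] by linarith
    qed
  qed
  then show ?thesis using y Wy by blast
qed

end

lemma gdist0: "x \<in> verts G \<Longrightarrow> gdist G x x = 0"
  unfolding gdist_def by (rule Least_eq_0) (rule exI[of _ "[x]"], simp)

lemma walk_len1: "length xs = Suc 0 \<Longrightarrow> hd xs = last xs"
  by (cases xs) auto

lemma gdist1:
  assumes "{x,y} \<in> edges G" "x \<in> verts G" "y \<in> verts G" "x \<noteq> y"
  shows "gdist G x y = 1"
  unfolding gdist_def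
proof (rule Least_equality)
  show "\<exists>xs. walk G xs \<and> hd xs = x \<and> last xs = y \<and> length xs = Suc 1"
    using assms by (intro exI[of _ "[x,y]"]) simp
  fix k assume "\<exists>xs. walk G xs \<and> hd xs = x \<and> last xs = y \<and> length xs = Suc k"
  then obtain xs where xs: "walk G xs" "hd xs = x" "last xs = y" "length xs = Suc k" by blast
  show "1 \<le> k"
  proof (rule ccontr)
    assume "\<not> 1 \<le> k"
    then have "k = 0" by simp
    then have "hd xs = last xs" using xs(4) walk_len1 by simp
    then show False using xs assms(4) by simp
  qed
qed

lemma gdist2:
  assumes "walk G [x,u,y]" "x \<noteq> y" "{x,y} \<notin> edges G"
  shows "gdist G x y = 2"
  unfolding gdist_def
proof (rule Least_equality)
  show "\<exists>xs. walk G xs \<and> hd xs = x \<and> last xs = y \<and> length xs = Suc 2"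
    using assms by (intro exI[of _ "[x,u,y]"]) simp
  fix k assume "\<exists>xs. walk G xs \<and> hd xs = x \<and> last xs = y \<and> length xs = Suc k"
  then obtain xs where xs: "walk G xs" "hd xs = x" "last xs = y" "length xs = Suc k" by blast
  show "2 \<le> k"
  proof (rule ccontr)
    assume "\<not> 2 \<le> k"
    then have "k = 0 \<or> k = 1" by auto
    then show False
    proof
      assume "k = 0"
      then have "hd xs = last xs" using xs(4) walk_len1 by simp
      then show False using xs assms(2) by simp
    next
      assume "k = 1"
      then obtain p q where "xs = [p,q]" using xs(4) by (auto simp: length_Suc_conv)
      then show False using xs assms(3) by simp
    qed
  qed
qed

context wtree begin

lemma thirdL:
  assumes e: "{a,b} \<in> E" and nm: "2 * m = n" and Wab: "W (Sd a b) = m" and Wba: "W (Sd b a) = m"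
    and x: "centroid T w x" "x \<noteq> a" "x \<noteq> b" "x \<in> Sd a b"
  shows "w b = 0 \<and> {b,x} \<in> E \<and> W (Sd b x) = m"
proof -
  have xV: "x \<in> V" and hx: "hs T w x = m" using x(1) cent_iff by auto
  have aV: "a \<in> V" and bV: "b \<in> V" and ab: "a \<noteq> b" using edge_props[OF e] by auto
  have e': "{b,a} \<in> E" using e by (simp add: insert_commute)
  have bc: "centroid T w b" using heavy_cent[OF e nm Wab] .
  define K where "K = cp x a"
  have KS: "K \<in> subtrees_of T x" unfolding K_def using aV x(2) by (intro cp_in) auto
  have WK: "W K \<le> m" using hs_ge[OF KS] hx by simp
  have s1: "Sd b a \<subseteq> K" unfolding K_def by (rule side_in_cp[OF e x(4)])
  have rab: "reachable (delete_vertex T x) a b"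
    by (rule reachable_edge) (use e aV bV x in auto)
  have bK: "b \<in> K" unfolding K_def cp_def using rab bV x by auto
  have bn: "b \<notin> Sd b a" using Sd_notin[OF e'] .
  have finK: "finite K" unfolding K_def by (rule finCp)
  have "W (Sd b a \<union> {b}) = W (Sd b a) + W {b}" using bn finSd by (intro W_union) auto
  moreover have "W (Sd b a \<union> {b}) \<le> W K" using s1 bK finK by (intro W_mono) auto
  ultimately have "m + w b \<le> m" using Wba WK by (simp add: W_def set_weight_def)
  then have wb: "w b = 0" by simp
  have xb: "x \<in> V - {b}" using xV x by auto
  obtain z where z: "{b,z} \<in> E" "cp b x = Sd b z" using subtree_Sd[OF bV cp_in[OF xb]] by blast
  have xz: "x \<in> Sd b z" using cp_self[OF xb] z(2) by simp
  have za: "z \<noteq> a"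
  proof
    assume "z = a"
    then have "x \<in> Sd b a" using xz by simp
    then show False using x(4) Sd_disj[OF e] by blast
  qed
  have "z = x"
  proof (rule ccontr)
    assume zx: "z \<noteq> x"
    have zV: "z \<in> V" and bz: "b \<noteq> z" using edge_props[OF z(1)] by auto
    have "reachable (delete_vertex T x) b z" by (rule reachable_edge) (use z(1) zV bV x zx in auto)
    then have "reachable (delete_vertex T x) a z" using rab by (rule reachable_trans[rotated])
    then have zK: "z \<in> K" unfolding K_def cp_def using zV zx by auto
    have "z \<notin> Sd b a" using Sd_disj2[OF z(1) e' za] Sd_in[OF z(1)] by blast
    then have d: "(Sd b a \<union> {b}) \<inter> {z} = {}" using bz by auto
    have "W ((Sd b a \<union> {b}) \<union> {z}) = W (Sd b a \<union> {b}) + W {z}" using d finSd by (intro W_union) auto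
    moreover have "W ((Sd b a \<union> {b}) \<union> {z}) \<le> W K" using s1 bK zK finK by (intro W_mono) auto
    moreover have "W (Sd b a \<union> {b}) = m" using \<open>W (Sd b a \<union> {b}) = W (Sd b a) + W {b}\<close> Wba wb
      by (simp add: W_def set_weight_def)
    ultimately have "m + w z \<le> m" using WK by (simp add: W_def set_weight_def)
    moreover have "0 < w z" using q1[OF z(1)] wb by simp
    ultimately show False by simp
  qed
  then have ebx: "{b,x} \<in> E" using z(1) by simp
  have exb: "{x,b} \<in> E" using ebx by (simp add: insert_commute)
  have "W (Sd x b) \<le> m" using hs_Sd[OF exb] hx by simp
  moreover have "W (Sd b x) \<le> m" using hs_Sd[OF ebx] bc cent_iff by simp
  moreover have "W (Sd b x) + W (Sd x b) = n" using W_Sd_sum[OF ebx] .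
  ultimately have "W (Sd b x) = m" using nm by linarith
  then show ?thesis using wb ebx by simp
qed

lemma subcond:
  assumes e: "{a,b} \<in> E" and nm: "2 * m = n" and Wba: "W (Sd b a) = m"
    and C: "centroids T w = {a,b}"
    and S: "subtree_set T S" "S \<subseteq> Sd b a" "a \<notin> S"
  shows "2 * (W S + 1) \<le> n"
proof -
  have e': "{b,a} \<in> E" using e by (simp add: insert_commute)
  have aV: "a \<in> V" using edge_props[OF e] by simp
  have ac: "centroid T w a" using C unfolding centroids_def by auto
  then have ha: "hs T w a = m" using cent_iff by simp
  have mpos: "0 < m" using nm npos by simp
  have "W S + 1 \<le> m"
  proof (cases "w a = 0")
    case False
    have "S \<subseteq> Sd b a - {a}" using S by auto
    then have "W S \<le> W (Sd b a - {a})" using finSd by (intro W_mono) auto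
    also have "\<dots> = W (Sd b a) - w a" using W_minus[OF Sd_in[OF e'] finSd] .
    finally show ?thesis using Wba False mpos by linarith
  next
    case True
    have SV: "S \<subseteq> V" and cS: "connected_graph (induced T S)" using S(1) unfolding subtree_set_def by auto
    then obtain s where s: "s \<in> S" unfolding connected_graph_def by auto
    have sV: "s \<in> V - {a}" using s SV S(3) by auto
    have Scp: "S \<subseteq> cp a s"
    proof
      fix u assume u: "u \<in> S"
      have "reachable (induced T S) s u" using cS s u unfolding connected_graph_def by simp
      then have "reachable (delete_vertex T a) s u"
        by (rule reachable_mono) (use SV S(3) in auto)
      then show "u \<in> cp a s" unfolding cp_def using u SV S(3) by auto
    qed
    obtain z where z: "{a,z} \<in> E" "cp a s = Sd a z" using subtree_Sd[OF aV cp_in[OF sV]] by blast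
    have zb: "z \<noteq> b"
    proof
      assume "z = b"
      then have "s \<in> Sd a b" using z(2) cp_self[OF sV] by simp
      moreover have "s \<in> Sd b a" using s S(2) by auto
      ultimately show False using Sd_disj[OF e] by blast
    qed
    have za: "z \<noteq> a" using edge_props[OF z(1)] by auto
    have Wz: "W (Sd a z) \<le> m" using hs_Sd[OF z(1)] ha by simp
    have "W (Sd a z) \<noteq> m"
    proof
      assume "W (Sd a z) = m"
      then have "centroid T w z" using heavy_cent[OF z(1) nm] by simp
      then have "z \<in> {a,b}" using C unfolding centroids_def by auto
      then show False using za zb by simp
    qed
    then have "W (Sd a z) < m" using Wz by simp
    moreover have "W S \<le> W (Sd a z)" using Scp z(2) finSd by (metis W_mono)
    ultimately show ?thesis by simp
  qed
  then show ?thesis using nm by simp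
qed

end

context wtree begin

lemma three:
  assumes ea: "{y,a} \<in> E" and eb: "{y,b} \<in> E" and ab: "a \<noteq> b" and wy: "w y = 0"
    and nm: "2 * m = n" and Wa: "W (Sd y a) = m" and Wb: "W (Sd y b) = m"
  shows "w y = 0 \<and> y \<in> V \<and> {c. central_centroid T w c} = {y} \<and> card (centroids T w) = 3 \<and>
     (\<exists>K1 K2. K1 \<noteq> K2 \<and> subtrees_of T y = {K1, K2} \<and> 2 * W K1 = n \<and> 2 * W K2 = n)"
proof -
  have yV: "y \<in> V" and aV: "a \<in> V" and bV: "b \<in> V" and ya: "y \<noteq> a" and yb: "y \<noteq> b"
    using edge_props[OF ea] edge_props[OF eb] by auto
  have ea': "{a,y} \<in> E" using ea by (simp add: insert_commute)
  have eb': "{b,y} \<in> E" using eb by (simp add: insert_commute)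
  have mpos: "0 < m" using nm npos by simp
  have dab: "Sd y a \<inter> Sd y b = {}" using Sd_disj2[OF ea eb ab] .
  have subs: "subtrees_of T y = {Sd y a, Sd y b}"
  proof (intro equalityI subsetI)
    fix K assume K: "K \<in> subtrees_of T y"
    obtain z where z: "{y,z} \<in> E" "K = Sd y z" using subtree_Sd[OF yV K] by blast
    show "K \<in> {Sd y a, Sd y b}"
    proof (rule ccontr)
      assume "K \<notin> {Sd y a, Sd y b}"
      then have za: "z \<noteq> a" and zb: "z \<noteq> b" using z by auto
      have d1: "Sd y z \<inter> Sd y a = {}" using Sd_disj2[OF z(1) ea za] .
      have d2: "Sd y z \<inter> Sd y b = {}" using Sd_disj2[OF z(1) eb zb] .
      have "W ((Sd y a \<union> Sd y b) \<union> Sd y z) = W (Sd y a \<union> Sd y b) + W (Sd y z)"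
        using d1 d2 finSd by (intro W_union) auto
      moreover have "W (Sd y a \<union> Sd y b) = m + m" using W_union[OF finSd finSd dab] Wa Wb by simp
      moreover have "W ((Sd y a \<union> Sd y b) \<union> Sd y z) \<le> W V" using Sd_sub finT by (intro W_mono) auto
      moreover have "w z \<le> W (Sd y z)" using W_elem[OF Sd_in[OF z(1)] finSd] .
      moreover have "0 < w z" using q1[OF z(1)] wy by simp
      ultimately show False using W_V nm by linarith
    qed
  next
    fix K assume "K \<in> {Sd y a, Sd y b}"
    then show "K \<in> subtrees_of T y" using Sd_subtree[OF ea] Sd_subtree[OF eb] by auto
  qed
  have ca: "centroid T w a" using heavy_cent[OF ea nm Wa] .
  have cb: "centroid T w b" using heavy_cent[OF eb nm Wb] .
  have hy: "hs T w y \<le> m" by (rule hs_le) (use subs Wa Wb in auto)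
  have cy: "centroid T w y" using hy m_le[OF yV] yV cent_iff by simp
  have Wa2: "W (Sd a y) = m" using W_Sd_sum[OF ea] Wa nm by simp
  have others: "x \<in> {a,y,b}" if cx: "centroid T w x" for x
  proof (rule ccontr)
    assume nx: "x \<notin> {a,y,b}"
    have "x \<in> V" using cx cent_iff by simp
    then have "x \<in> Sd y a \<union> Sd a y" using Sd_cover[OF ea] by simp
    then show False
    proof
      assume "x \<in> Sd y a"
      then have "w a = 0" using thirdL[OF ea nm Wa Wa2 cx] nx by auto
      then show False using q1[OF ea] wy by simp
    next
      assume xs: "x \<in> Sd a y"
      then have r: "{y,x} \<in> E \<and> W (Sd y x) = m" using thirdL[OF ea' nm Wa2 Wa cx] nx by auto
      then have "Sd y x \<in> {Sd y a, Sd y b}" using Sd_subtree[of y x] subs by auto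
      moreover have "x \<in> Sd y x" using Sd_in r by simp
      moreover have "Sd y x \<inter> Sd y a = {}" using Sd_disj2[of y x a] r ea nx by auto
      moreover have "Sd y x \<inter> Sd y b = {}" using Sd_disj2[of y x b] r eb nx by auto
      ultimately show False by auto
    qed
  qed
  have C: "centroids T w = {a,y,b}"
    using others ca cb cy unfolding centroids_def by auto
  have card3: "card (centroids T w) = 3" using C ab ya yb by auto
  have nab: "{a,b} \<notin> E"
  proof
    assume eab: "{a,b} \<in> E"
    have n1: "{a,b} \<noteq> {y,a}" using ab yb by (auto simp: doubleton_eq_iff)
    have n2: "{b,y} \<noteq> {y,a}" using ab yb ya by (auto simp: doubleton_eq_iff)
    have "reachable (V, E - {{y,a}}) a b" by (rule reachable_edge) (use eab n1 aV bV in auto)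
    moreover have "reachable (V, E - {{y,a}}) b y" by (rule reachable_edge) (use eb' n2 yV bV in auto)
    ultimately have "reachable (V, E - {{y,a}}) a y" by (rule reachable_trans)
    then show False using acyc[OF ea] by simp
  qed
  define I where "I = induced T {a,y,b}"
  have VI: "verts I = {a,y,b}" unfolding I_def by simp
  have eI1: "{y,a} \<in> edges I" "{a,y} \<in> edges I" "{y,b} \<in> edges I" "{b,y} \<in> edges I"
    unfolding I_def using ea ea' eb eb' by auto
  have nI: "{a,b} \<notin> edges I" "{b,a} \<notin> edges I" unfolding I_def using nab by (auto simp: insert_commute)
  have ayb: "a \<in> verts I" "y \<in> verts I" "b \<in> verts I" using VI by auto
  have g: "gdist I y a = 1" "gdist I y b = 1" "gdist I a y = 1" "gdist I b y = 1"
    by (rule gdist1[OF eI1(1) ayb(2) ayb(1) ya], rule gdist1[OF eI1(3) ayb(2) ayb(3) yb],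
        rule gdist1[OF eI1(2) ayb(1) ayb(2) ya[symmetric]], rule gdist1[OF eI1(4) ayb(3) ayb(2) yb[symmetric]])
  have g0: "gdist I a a = 0" "gdist I b b = 0" "gdist I y y = 0"
    by (rule gdist0[OF ayb(1)], rule gdist0[OF ayb(3)], rule gdist0[OF ayb(2)])
  have w1: "walk I [a,y,b]" using eI1 ayb by simp
  have w2: "walk I [b,y,a]" using eI1 ayb by simp
  have g2: "gdist I a b = 2" "gdist I b a = 2"
    by (rule gdist2[OF w1 ab nI(1)], rule gdist2[OF w2 ab[symmetric] nI(2)])
  have ey: "ecc I y = 1" unfolding ecc_def VI using g g0 by simp
  have ea2: "ecc I a = 2" unfolding ecc_def VI using g g0 g2 by simp
  have eb2: "ecc I b = 2" unfolding ecc_def VI using g g0 g2 by simp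
  have cen: "{c. central_centroid T w c} = {y}"
  proof (intro equalityI subsetI)
    fix c assume "c \<in> {c. central_centroid T w c}"
    then have cc: "centroid T w c" "\<forall>c'\<in>{a,y,b}. ecc I c \<le> ecc I c'"
      unfolding central_centroid_def C I_def by auto
    then have "c \<in> {a,y,b}" using C unfolding centroids_def by auto
    moreover have "ecc I c \<le> 1" using cc(2) ey by auto
    ultimately show "c \<in> {y}" using ea2 eb2 by auto
  next
    fix c assume "c \<in> {y}"
    then show "c \<in> {c. central_centroid T w c}"
      unfolding central_centroid_def C using cy ey ea2 eb2 unfolding I_def by auto
  qed
  have "Sd y a \<noteq> Sd y b" using dab Sd_in[OF ea] by auto
  then have "\<exists>K1 K2. K1 \<noteq> K2 \<and> subtrees_of T y = {K1, K2} \<and> 2 * W K1 = n \<and> 2 * W K2 = n"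
    using subs Wa Wb nm by (intro exI[of _ "Sd y a"] exI[of _ "Sd y b"]) simp
  then show ?thesis using wy yV cen card3 by blast
qed

theorem classify:
  "(\<exists>c. centroids T w = {c} \<and> 2 * hs T w c < n) \<or>
   (\<exists>a b. {a,b} \<in> E \<and> centroids T w = {a,b} \<and>
      2 * W (side_of_edge T {a,b} a) = n \<and> 2 * W (side_of_edge T {a,b} b) = n \<and>
      (\<forall>S. subtree_set T S \<and> S \<subseteq> side_of_edge T {a,b} a \<and> a \<notin> S \<longrightarrow> 2 * (W S + 1) \<le> n) \<and>
      (\<forall>S. subtree_set T S \<and> S \<subseteq> side_of_edge T {a,b} b \<and> b \<notin> S \<longrightarrow> 2 * (W S + 1) \<le> n)) \<or>
   (\<exists>y. w y = 0 \<and> y \<in> V \<and> {c. central_centroid T w c} = {y} \<and> card (centroids T w) = 3 \<and>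
     (\<exists>K1 K2. K1 \<noteq> K2 \<and> subtrees_of T y = {K1, K2} \<and> 2 * W K1 = n \<and> 2 * W K2 = n))"
proof -
  obtain c where cV: "c \<in> V" and hc: "hs T w c = m" using m_in by blast
  have cc: "centroid T w c" using cV hc cent_iff by simp
  show ?thesis
  proof (cases "2 * m < n")
    case True
    then show ?thesis using caseA[OF cc True] hc by auto
  next
    case False
    then obtain y where nm: "2 * m = n" and y: "{c,y} \<in> E" "W (Sd c y) = m"
      using caseB[OF cc] by auto
    have y': "{y,c} \<in> E" using y(1) by (simp add: insert_commute)
    have Wyc: "W (Sd y c) = m" using W_Sd_sum[OF y(1)] y(2) nm by simp
    have cy: "centroid T w y" using heavy_cent[OF y(1) nm y(2)] .
    have cy_ne: "c \<noteq> y" using edge_props[OF y(1)] by simp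
    show ?thesis
    proof (cases "centroids T w = {c,y}")
      case True
      have s1: "side_of_edge T {c,y} c = Sd y c" unfolding Sd_def by (simp add: insert_commute)
      have s2: "side_of_edge T {c,y} y = Sd c y" unfolding Sd_def by simp
      have C2: "centroids T w = {y,c}" using True by auto
      have A: "\<forall>S. subtree_set T S \<and> S \<subseteq> side_of_edge T {c,y} c \<and> c \<notin> S \<longrightarrow> 2 * (W S + 1) \<le> n"
        using subcond[OF y(1) nm Wyc True] s1 by auto
      have B: "\<forall>S. subtree_set T S \<and> S \<subseteq> side_of_edge T {c,y} y \<and> y \<notin> S \<longrightarrow> 2 * (W S + 1) \<le> n"
        using subcond[OF y' nm y(2) C2] s2 by auto
      have "{c,y} \<in> E \<and> centroids T w = {c,y} \<and>
        2 * W (side_of_edge T {c,y} c) = n \<and> 2 * W (side_of_edge T {c,y} y) = n \<and>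
        (\<forall>S. subtree_set T S \<and> S \<subseteq> side_of_edge T {c,y} c \<and> c \<notin> S \<longrightarrow> 2 * (W S + 1) \<le> n) \<and>
        (\<forall>S. subtree_set T S \<and> S \<subseteq> side_of_edge T {c,y} y \<and> y \<notin> S \<longrightarrow> 2 * (W S + 1) \<le> n)"
        using y(1) True s1 s2 Wyc y(2) nm A B by simp
      then show ?thesis by blast
    next
      case False
      then obtain x where cx: "centroid T w x" and xn: "x \<noteq> c" "x \<noteq> y"
        using cc cy unfolding centroids_def by auto
      have "x \<in> V" using cx cent_iff by simp
      then have "x \<in> Sd c y \<union> Sd y c" using Sd_cover[OF y(1)] by simp
      then show ?thesis
      proof
        assume "x \<in> Sd c y"
        then have r: "w y = 0 \<and> {y,x} \<in> E \<and> W (Sd y x) = m" using thirdL[OF y(1) nm y(2) Wyc cx xn] by simp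
        have "w y = 0 \<and> y \<in> V \<and> {c. central_centroid T w c} = {y} \<and> card (centroids T w) = 3 \<and>
          (\<exists>K1 K2. K1 \<noteq> K2 \<and> subtrees_of T y = {K1, K2} \<and> 2 * W K1 = n \<and> 2 * W K2 = n)"
          using three[OF y' _ _ _ nm Wyc, of x] r xn by auto
        then show ?thesis by blast
      next
        assume "x \<in> Sd y c"
        then have r: "w c = 0 \<and> {c,x} \<in> E \<and> W (Sd c x) = m" using thirdL[OF y' nm Wyc y(2) cx xn(2) xn(1)] by simp
        have "w c = 0 \<and> c \<in> V \<and> {c'. central_centroid T w c'} = {c} \<and> card (centroids T w) = 3 \<and>
          (\<exists>K1 K2. K1 \<noteq> K2 \<and> subtrees_of T c = {K1, K2} \<and> 2 * W K1 = n \<and> 2 * W K2 = n)"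
          using three[OF y(1) _ _ _ nm y(2), of x] r xn by auto
        then show ?thesis by blast
      qed
    qed
  qed
qed

end

context cgraph begin

abbreviation BT where "BT \<equiv> block_tree G"
abbreviation bw where "bw \<equiv> bt_weight G"

lemma BT_verts: "verts BT = Inl ` {v. cut_vertex G v} \<union> Inr ` {B. is_block G B}"
  unfolding block_tree_def by simp

lemma BT_edges: "edges BT = {{Inl v, Inr B} | v B. cut_vertex G v \<and> is_block G B \<and> v \<in> verts B}"
  unfolding block_tree_def by simp

lemma cut_in: "cut_vertex G v \<Longrightarrow> v \<in> verts G" unfolding cut_vertex_def by simp

lemma edge_form:
  assumes "{x,y} \<in> edges BT"
  obtains v B where "cut_vertex G v" "is_block G B" "v \<in> verts B"
    "(x = Inl v \<and> y = Inr B) \<or> (x = Inr B \<and> y = Inl v)"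
proof -
  obtain v B where vB: "{x,y} = {Inl v, Inr B}" "cut_vertex G v" "is_block G B" "v \<in> verts B"
    using assms unfolding BT_edges by blast
  then have "(x = Inl v \<and> y = Inr B) \<or> (x = Inr B \<and> y = Inl v)" by (auto simp: doubleton_eq_iff)
  then show ?thesis using that vB by blast
qed

lemma BT_edgeI: "cut_vertex G v \<Longrightarrow> is_block G B \<Longrightarrow> v \<in> verts B \<Longrightarrow> {Inl v, Inr B} \<in> edges BT"
  unfolding BT_edges by blast

lemma BT_edgeI': "cut_vertex G v \<Longrightarrow> is_block G B \<Longrightarrow> v \<in> verts B \<Longrightarrow> {Inr B, Inl v} \<in> edges BT"
  using BT_edgeI by (simp add: insert_commute)

lemma BT_InlI: "cut_vertex G v \<Longrightarrow> Inl v \<in> verts BT" unfolding BT_verts by blast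
lemma BT_InrI: "is_block G B \<Longrightarrow> Inr B \<in> verts BT" unfolding BT_verts by blast

lemma fin_blocks: "finite {B. is_block G B}"
proof -
  have "{B. is_block G B} \<subseteq> Pow (verts G) \<times> Pow (edges G)"
  proof
    fix B assume "B \<in> {B. is_block G B}"
    then have "subgraph B G" using block_props by blast
    then show "B \<in> Pow (verts G) \<times> Pow (edges G)"
      unfolding subgraph_def verts_def edges_def by (cases B) auto
  qed
  moreover have "finite (Pow (verts G) \<times> Pow (edges G))" using finV finE by simp
  ultimately show ?thesis by (rule finite_subset)
qed

lemma fin_cut: "finite {v. cut_vertex G v}"
proof -
  have "{v. cut_vertex G v} \<subseteq> verts G" using cut_in by blast
  then show ?thesis by (rule finite_subset[OF _ finV])
qed

lemma finBT: "finite (verts BT)" unfolding BT_verts using fin_blocks fin_cut by simp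

lemma link:
  assumes "is_block G B" "is_block G B'" "u \<in> verts B" "u \<in> verts B'"
  shows "reachable BT (Inr B) (Inr B')"
proof (cases "B = B'")
  case True then show ?thesis using BT_InrI[OF assms(1)] by (simp add: reachable_refl)
next
  case False
  have cu: "cut_vertex G u" using shared_cut[OF assms(1,2) False assms(3,4)] .
  have "reachable BT (Inr B) (Inl u)"
    by (rule reachable_edge[OF BT_edgeI'[OF cu assms(1,3)] BT_InrI[OF assms(1)] BT_InlI[OF cu]])
  moreover have "reachable BT (Inl u) (Inr B')"
    by (rule reachable_edge[OF BT_edgeI[OF cu assms(2,4)] BT_InlI[OF cu] BT_InrI[OF assms(2)]])
  ultimately show ?thesis by (rule reachable_trans)
qed

lemma blocks_reach:
  assumes B1: "is_block G B1" and a: "a \<in> verts B1" and r: "reachable G a u"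
  shows "\<forall>B. is_block G B \<and> u \<in> verts B \<longrightarrow> reachable BT (Inr B1) (Inr B)"
  using r
proof (induction rule: reachable_induct)
  case base
  show ?case
  proof (intro allI impI)
    fix B assume "is_block G B \<and> a \<in> verts B"
    then show "reachable BT (Inr B1) (Inr B)" using link[OF B1, of B a] a by simp
  qed
next
  case (step p q)
  obtain Be where Be: "is_block G Be" "p \<in> verts Be" "q \<in> verts Be" using edge_block[OF step.hyps(2)] by blast
  have r1: "reachable BT (Inr B1) (Inr Be)" using step.IH Be by blast
  show ?case
  proof (intro allI impI)
    fix B assume "is_block G B \<and> q \<in> verts B"
    then have "reachable BT (Inr Be) (Inr B)" using link[OF Be(1), of B q] Be(3) by simp
    with r1 show "reachable BT (Inr B1) (Inr B)" by (rule reachable_trans)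
  qed
qed

lemma block_ne: "is_block G B \<Longrightarrow> \<exists>u. u \<in> verts B"
  using block_props unfolding connected_graph_def by blast

lemma block_sub: "is_block G B \<Longrightarrow> verts B \<subseteq> verts G"
  using block_props unfolding subgraph_def by blast

lemma to_block: "t \<in> verts BT \<Longrightarrow> \<exists>B. is_block G B \<and> reachable BT t (Inr B)"
proof -
  assume t: "t \<in> verts BT"
  then consider (l) v where "t = Inl v" "cut_vertex G v" | (r) B where "t = Inr B" "is_block G B"
    unfolding BT_verts by blast
  then show ?thesis
  proof cases
    case l
    obtain B where B: "is_block G B" "v \<in> verts B" using vertex_block[OF cut_in[OF l(2)]] by blast
    have "reachable BT (Inl v) (Inr B)"
      by (rule reachable_edge[OF BT_edgeI[OF l(2) B] BT_InlI[OF l(2)] BT_InrI[OF B(1)]])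
    then show ?thesis using l B by blast
  next
    case r then show ?thesis using t by (intro exI[of _ B]) (simp add: reachable_refl)
  qed
qed

lemma connBT: "x \<in> verts BT \<Longrightarrow> y \<in> verts BT \<Longrightarrow> reachable BT x y"
proof -
  assume x: "x \<in> verts BT" and y: "y \<in> verts BT"
  obtain B1 where B1: "is_block G B1" "reachable BT x (Inr B1)" using to_block[OF x] by blast
  obtain B2 where B2: "is_block G B2" "reachable BT y (Inr B2)" using to_block[OF y] by blast
  obtain a where a: "a \<in> verts B1" using block_ne[OF B1(1)] by blast
  obtain b where b: "b \<in> verts B2" using block_ne[OF B2(1)] by blast
  have "reachable G a b" using conn a b block_sub[OF B1(1)] block_sub[OF B2(1)]
    unfolding connected_graph_def by blast
  then have "reachable BT (Inr B1) (Inr B2)" using blocks_reach[OF B1(1) a] B2(1) b by blast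
  then have "reachable BT x (Inr B2)" using B1(2) by (rule reachable_trans[rotated])
  then show ?thesis using reachable_sym[OF B2(2)] by (rule reachable_trans)
qed

lemma acyc_main:
  assumes cv: "cut_vertex G v" and B: "is_block G B" and vB: "v \<in> verts B"
  shows "\<not> reachable (verts BT, edges BT - {{Inl v, Inr B}}) (Inr B) (Inl v)"
proof
  assume r: "reachable (verts BT, edges BT - {{Inl v, Inr B}}) (Inr B) (Inl v)"
  have vG: "v \<in> verts G" using cut_in[OF cv] .
  obtain a0 where a0: "a0 \<in> verts G - {v}" using cv unfolding cut_vertex_iff[OF finV conn] by blast
  have two: "2 \<le> card (verts G)"
  proof -
    have "{v, a0} \<subseteq> verts G" using vG a0 by auto
    then have "card {v,a0} \<le> card (verts G)" using finV by (rule card_mono[rotated])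
    moreover have "card {v,a0} = 2" using a0 by (auto simp: card_insert_if)
    ultimately show ?thesis by simp
  qed
  define D where "D = {u. \<exists>a\<in>verts B - {v}. reachable (delete_vertex G v) a u}"
  define X where "X = {t. (\<exists>u\<in>D. t = Inl u) \<or> (\<exists>B'. t = Inr B' \<and> is_block G B' \<and> (\<exists>u\<in>verts B'. u \<in> D))}"
  have Dv: "v \<notin> D"
  proof
    assume "v \<in> D"
    then obtain a where "reachable (delete_vertex G v) a v" unfolding D_def by blast
    from reachable_in[OF this] have "v \<in> verts (delete_vertex G v)" by simp
    then show False by simp
  qed
  have Dclos: "u' \<in> D" if h: "u \<in> D" "reachable (delete_vertex G v) u u'" for u u'
  proof -
    obtain a where a: "a \<in> verts B - {v}" "reachable (delete_vertex G v) a u" using h(1) unfolding D_def by blast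
    have "reachable (delete_vertex G v) a u'" using a(2) h(2) by (rule reachable_trans)
    then show ?thesis using a(1) unfolding D_def by blast
  qed
  have "Inl v \<in> X" using r
  proof (induction rule: reachable_induct)
    case base
    obtain a where a: "a \<in> verts B" "a \<noteq> v" using block_other[OF B two] by blast
    have "a \<in> verts G - {v}" using a block_sub[OF B] by auto
    then have "a \<in> D" unfolding D_def using a by (intro CollectI bexI[of _ a]) (auto intro: reachable_refl)
    then show ?case unfolding X_def using B a by blast
  next
    case (step t t')
    have et: "{t,t'} \<in> edges BT" and ne: "{t,t'} \<noteq> {Inl v, Inr B}" using step.hyps(2) by auto
    obtain u B' where uB: "cut_vertex G u" "is_block G B'" "u \<in> verts B'"
      "(t = Inl u \<and> t' = Inr B') \<or> (t = Inr B' \<and> t' = Inl u)" using edge_form[OF et] by blast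
    from uB(4) show ?case
    proof
      assume tt: "t = Inl u \<and> t' = Inr B'"
      then have "u \<in> D" using step.IH unfolding X_def by auto
      then show ?thesis unfolding X_def using tt uB by blast
    next
      assume tt: "t = Inr B' \<and> t' = Inl u"
      then obtain u0 where u0: "u0 \<in> verts B'" "u0 \<in> D" using step.IH unfolding X_def by auto
      have u0v: "u0 \<noteq> v" using u0 Dv by auto
      show ?thesis
      proof (cases "u = v")
        case False
        have "u0 \<in> verts B' - {v}" "u \<in> verts B' - {v}" using u0 u0v uB(3) False by auto
        then have "reachable (delete_vertex G v) u0 u" by (rule block_conn_del[OF uB(2)])
        then have "u \<in> D" using Dclos u0(2) by blast
        then show ?thesis unfolding X_def using tt by blast
      next
        case True
        have BB: "B \<noteq> B'"
        proof
          assume "B = B'"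
          then have "{t,t'} = {Inl v, Inr B}" using tt True by auto
          then show False using ne by simp
        qed
        obtain a where a: "a \<in> verts B - {v}" "reachable (delete_vertex G v) a u0" using u0(2) unfolding D_def by blast
        have "v \<in> verts B'" using uB(3) True by simp
        moreover have "u0 \<in> verts B' - {v}" using u0 u0v by simp
        ultimately have "\<not> reachable (delete_vertex G v) a u0"
          using key[OF B uB(2) BB vB] a(1) by simp
        then show ?thesis using a(2) by simp
      qed
    qed
  qed
  then show False unfolding X_def using Dv by auto
qed

lemma acycBT:
  assumes "{x,y} \<in> edges BT"
  shows "\<not> reachable (verts BT, edges BT - {{x,y}}) y x"
proof -
  obtain v B where vB: "cut_vertex G v" "is_block G B" "v \<in> verts B"
    "(x = Inl v \<and> y = Inr B) \<or> (x = Inr B \<and> y = Inl v)" using edge_form[OF assms] by blast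
  have nr: "\<not> reachable (verts BT, edges BT - {{Inl v, Inr B}}) (Inr B) (Inl v)" using acyc_main[OF vB(1-3)] .
  from vB(4) show ?thesis
  proof
    assume xy: "x = Inl v \<and> y = Inr B"
    then have "x = Inl v" "y = Inr B" by auto
    then show ?thesis using nr by simp
  next
    assume xy: "x = Inr B \<and> y = Inl v"
    then have xy': "x = Inr B" "y = Inl v" by auto
    have eq: "{Inr B, Inl v} = {Inl v, Inr B}" by (rule insert_commute)
    show ?thesis
    proof
      assume "reachable (verts BT, edges BT - {{x,y}}) y x"
      then have "reachable (verts BT, edges BT - {{Inl v, Inr B}}) (Inl v) (Inr B)" unfolding xy' eq .
      then have "reachable (verts BT, edges BT - {{Inl v, Inr B}}) (Inr B) (Inl v)" by (rule reachable_sym)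
      then show False using nr by contradiction
    qed
  qed
qed

lemma totBT: "set_weight bw (verts BT) = card (verts G)"
proof -
  define Cut where "Cut = {v. cut_vertex G v}"
  define Blk where "Blk = {B. is_block G B}"
  define NCB where "NCB B = {u \<in> verts B. \<not> cut_vertex G u}" for B
  have fC: "finite (Inl ` Cut :: ('a + 'a sgraph) set)" unfolding Cut_def using fin_cut by simp
  have fB: "finite (Inr ` Blk :: ('a + 'a sgraph) set)" unfolding Blk_def using fin_blocks by simp
  have dj: "Inl ` Cut \<inter> (Inr ` Blk :: ('a + 'a sgraph) set) = {}" by auto
  have "set_weight bw (verts BT) = sum bw (Inl ` Cut \<union> Inr ` Blk)"
    unfolding set_weight_def BT_verts Cut_def Blk_def by simp
  also have "\<dots> = sum bw (Inl ` Cut) + sum bw (Inr ` Blk)" by (rule sum.union_disjoint[OF fC fB dj])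
  also have "sum bw (Inl ` Cut) = sum (bw \<circ> Inl) Cut"
    by (rule sum.reindex) (simp add: inj_on_def)
  also have "\<dots> = card Cut" by (simp add: bt_weight_def)
  also have "sum bw (Inr ` Blk) = sum (bw \<circ> Inr) Blk"
    by (rule sum.reindex) (simp add: inj_on_def)
  also have "\<dots> = (\<Sum>B\<in>Blk. card (NCB B))" by (simp add: bt_weight_def NCB_def)
  also have "\<dots> = card (\<Union>B\<in>Blk. NCB B)"
  proof (rule card_UN_disjoint[symmetric])
    show "finite Blk" unfolding Blk_def by (rule fin_blocks)
    show "\<forall>B\<in>Blk. finite (NCB B)"
    proof
      fix B assume "B \<in> Blk"
      then have "verts B \<subseteq> verts G" unfolding Blk_def using block_sub by simp
      then have "finite (verts B)" using finV by (rule finite_subset)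
      then show "finite (NCB B)" unfolding NCB_def by simp
    qed
    show "\<forall>B\<in>Blk. \<forall>B'\<in>Blk. B \<noteq> B' \<longrightarrow> NCB B \<inter> NCB B' = {}"
    proof (intro ballI impI)
      fix B B' assume BB: "B \<in> Blk" "B' \<in> Blk" "B \<noteq> B'"
      show "NCB B \<inter> NCB B' = {}"
      proof (rule ccontr)
        assume "NCB B \<inter> NCB B' \<noteq> {}"
        then obtain u where u: "u \<in> verts B" "u \<in> verts B'" "\<not> cut_vertex G u" unfolding NCB_def by blast
        have "is_block G B" "is_block G B'" using BB unfolding Blk_def by auto
        then have "cut_vertex G u" using shared_cut BB(3) u(1,2) by simp
        then show False using u(3) by simp
      qed
    qed
  qed
  also have "(\<Union>B\<in>Blk. NCB B) = verts G - Cut"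
  proof
    show "(\<Union>B\<in>Blk. NCB B) \<subseteq> verts G - Cut"
    proof
      fix u assume "u \<in> (\<Union>B\<in>Blk. NCB B)"
      then obtain B where B: "is_block G B" "u \<in> verts B" "\<not> cut_vertex G u" unfolding NCB_def Blk_def by blast
      then have "u \<in> verts G" using block_sub by blast
      then show "u \<in> verts G - Cut" using B unfolding Cut_def by simp
    qed
    show "verts G - Cut \<subseteq> (\<Union>B\<in>Blk. NCB B)"
    proof
      fix u assume u: "u \<in> verts G - Cut"
      obtain B where "is_block G B" "u \<in> verts B" using vertex_block u by blast
      then show "u \<in> (\<Union>B\<in>Blk. NCB B)" using u unfolding NCB_def Blk_def Cut_def by blast
    qed
  qed
  also have "card Cut + card (verts G - Cut) = card (verts G)"
  proof -
    have sub: "Cut \<subseteq> verts G" unfolding Cut_def using cut_in by blast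
    have "card (verts G - Cut) = card (verts G) - card Cut" by (rule card_Diff_subset[OF finite_subset[OF sub finV] sub])
    moreover have "card Cut \<le> card (verts G)" by (rule card_mono[OF finV sub])
    ultimately show ?thesis by simp
  qed
  finally show ?thesis .
qed

lemma wtreeBT: "wtree BT bw (card (verts G))"
proof
  show "finite (verts BT)" by (rule finBT)
  show "verts BT \<noteq> {}"
  proof -
    obtain u where "u \<in> verts G" using conn unfolding connected_graph_def by blast
    then obtain B where "is_block G B" using vertex_block by blast
    then show ?thesis using BT_InrI by blast
  qed
  show "\<exists>x y. x \<noteq> y \<and> e = {x, y} \<and> x \<in> verts BT \<and> y \<in> verts BT" if he: "e \<in> edges BT" for e
  proof -
    obtain v B where "e = {Inl v, Inr B}" "cut_vertex G v" "is_block G B"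
      using he unfolding BT_edges by blast
    then show ?thesis using BT_InlI BT_InrI by blast
  qed
  show "reachable BT x y" if "x \<in> verts BT" "y \<in> verts BT" for x y using connBT that by blast
  show "\<not> reachable (verts BT, edges BT - {{x, y}}) y x" if "{x, y} \<in> edges BT" for x y
    using acycBT that by blast
  show "set_weight bw (verts BT) = card (verts G)" by (rule totBT)
  show "0 < card (verts G)" using finV conn unfolding connected_graph_def by (simp add: card_gt_0_iff)
  show "0 < bw x \<or> 0 < bw y" if hxy: "{x, y} \<in> edges BT" for x y
  proof -
    obtain v B where "(x = Inl v \<and> y = Inr B) \<or> (x = Inr B \<and> y = Inl v)"
      using edge_form[OF hxy] by blast
    then show ?thesis by (auto simp: bt_weight_def)
  qed
qed

end

lemma zero_block_two:
  assumes cg: "cgraph G" and B: "is_block G B" and w0: "bt_weight G (Inr B) = 0"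
    and K: "subtrees_of (block_tree G) (Inr B) = {K1, K2}"
    and n2: "2 \<le> card (verts G)"
  shows "card (verts B) = 2 \<and> edges B = {verts B}"
proof -
  interpret cgraph G by (rule cg)
  interpret W: wtree "block_tree G" "bt_weight G" "card (verts G)" by (rule wtreeBT)
  have finB: "finite (verts B)" using block_sub[OF B] finV by (rule finite_subset)
  have "card {u \<in> verts B. \<not> cut_vertex G u} = 0" using w0 by (simp add: bt_weight_def)
  then have "{u \<in> verts B. \<not> cut_vertex G u} = {}" using finB by simp
  then have allcut: "cut_vertex G u" if "u \<in> verts B" for u using that by blast
  define f where "f u = W.Sd (Inr B) (Inl u)" for u
  have eu: "{Inr B, Inl u} \<in> edges (block_tree G)" if "u \<in> verts B" for u
    by (rule BT_edgeI'[OF allcut[OF that] B that])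
  have fin: "f ` verts B \<subseteq> {K1, K2}"
  proof
    fix K assume "K \<in> f ` verts B"
    then obtain u where u: "u \<in> verts B" "K = f u" by blast
    have "f u \<in> subtrees_of (block_tree G) (Inr B)" unfolding f_def by (rule W.Sd_subtree[OF eu[OF u(1)]])
    then show "K \<in> {K1, K2}" using K u by simp
  qed
  have inj: "inj_on f (verts B)"
  proof
    fix u u' assume u: "u \<in> verts B" "u' \<in> verts B" "f u = f u'"
    show "u = u'"
    proof (rule ccontr)
      assume "u \<noteq> u'"
      then have "Inl u \<noteq> (Inl u' :: 'a + 'a sgraph)" by simp
      then have "f u \<inter> f u' = {}" unfolding f_def by (rule W.Sd_disj2[OF eu[OF u(1)] eu[OF u(2)]])
      moreover have "Inl u \<in> f u" unfolding f_def by (rule W.Sd_in[OF eu[OF u(1)]])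
      ultimately show False using u(3) by simp
    qed
  qed
  have "card (verts B) = card (f ` verts B)" using card_image[OF inj] by simp
  also have "\<dots> \<le> card {K1, K2}" using fin by (rule card_mono[rotated]) simp
  also have "\<dots> \<le> 2" by (simp add: card_insert_if)
  finally have le2: "card (verts B) \<le> 2" .
  obtain u1 where u1: "u1 \<in> verts B" using block_ne[OF B] by blast
  obtain u2 where u2: "u2 \<in> verts B" "u2 \<noteq> u1" using block_other[OF B n2] by blast
  have sub: "{u1,u2} \<subseteq> verts B" using u1 u2 by auto
  have c2: "card {u1,u2} = 2" using u2 by (auto simp: card_insert_if)
  then have "card {u1,u2} = card (verts B)" using le2 card_mono[OF finB sub] by simp
  then have VB: "verts B = {u1,u2}" using card_subset_eq[OF finB sub] by simp
  have bp: "subgraph B G" "connected_graph B" using block_props[OF B] by auto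
  have esub: "e = {u1,u2}" if e: "e \<in> edges B" for e
  proof -
    have "e \<subseteq> {u1,u2}" "e \<in> edges G" using e bp(1) VB unfolding subgraph_def by auto
    moreover obtain x y where "x \<noteq> y" "e = {x,y}" using edge2 \<open>e \<in> edges G\<close> by blast
    ultimately show ?thesis by auto
  qed
  have "reachable B u1 u2" using bp(2) VB unfolding connected_graph_def by simp
  then have "(u1,u2) \<in> (adj B)\<^sup>*" by (simp add: reachable_iff)
  then obtain z where "(u1,z) \<in> adj B" using u2(2) by (metis converse_rtranclE)
  then have "{u1,z} \<in> edges B" by (simp add: adj_def)
  then have "{u1,u2} \<in> edges B" using esub by metis
  then have "edges B = {{u1,u2}}" using esub by blast
  then show ?thesis using VB c2 by simp
qed

theorem corollary5p1:
  fixes G :: "'a sgraph" and n :: nat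
  assumes wf: "wf_graph G"
    and conn: "connected_graph G"
    and n_def: "n = card (verts G)"
  defines "T \<equiv> block_tree G" and "w \<equiv> bt_weight G"
  defines "P1 \<equiv> (\<exists>c. centroids T w = {c} \<and> real (hs T w c) < real n / 2)"
    and "P2 \<equiv> (\<exists>v B. cut_vertex G v \<and> is_block G B \<and> v \<in> verts B \<and>
              centroids T w = {Inl v, Inr B} \<and>
              real (set_weight w (side_of_edge T {Inl v, Inr B} (Inl v))) = real n / 2 \<and>
              real (set_weight w (side_of_edge T {Inl v, Inr B} (Inr B))) = real n / 2 \<and>
              (\<forall>S. subtree_set T S \<and> S \<subseteq> side_of_edge T {Inl v, Inr B} (Inl v) \<and> Inl v \<notin> S
                   \<longrightarrow> real (set_weight w S) \<le> real n / 2 - 1) \<and>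
              (\<forall>S. subtree_set T S \<and> S \<subseteq> side_of_edge T {Inl v, Inr B} (Inr B) \<and> Inr B \<notin> S
                   \<longrightarrow> real (set_weight w S) \<le> real n / 2 - 1))"
    and "P3 \<equiv> (\<exists>B. is_block G B \<and> w (Inr B) = 0 \<and>
              {c. central_centroid T w c} = {Inr B} \<and>
              card (centroids T w) = 3 \<and>
              (\<exists>T1 T2. T1 \<noteq> T2 \<and> subtrees_of T (Inr B) = {T1, T2} \<and>
                  real (set_weight w T1) = real n / 2 \<and> real (set_weight w T2) = real n / 2) \<and>
              card (verts B) = 2 \<and> edges B = {verts B})"
  shows "(P1 \<and> \<not> P2 \<and> \<not> P3) \<or> (\<not> P1 \<and> P2 \<and> \<not> P3) \<or> (\<not> P1 \<and> \<not> P2 \<and> P3)"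
proof -
  have cg: "cgraph G" using wf conn by (rule cgraph.intro)
  interpret cgraph G by (rule cg)
  interpret W: wtree T w n unfolding T_def w_def n_def by (rule wtreeBT)
  have WW: "W.W S = set_weight w S" for S by (simp add: W.W_def)
  have c1: "\<not> P2" if "card (centroids T w) = 1"
  proof
    assume P2
    then obtain v B where "centroids T w = {Inl v, Inr B}" unfolding P2_def by blast
    then have "card (centroids T w) = 2" by simp
    then show False using that by simp
  qed
  have c3: "\<not> P3" if h3: "card (centroids T w) \<noteq> 3"
  proof
    assume P3
    then have "card (centroids T w) = 3" unfolding P3_def by blast
    then show False using h3 by simp
  qed
  have c1': "\<not> P1" if "card (centroids T w) \<noteq> 1"
  proof
    assume P1
    then obtain c where "centroids T w = {c}" unfolding P1_def by blast
    then show False using that by simp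
  qed
  have c2': "\<not> P2" if "card (centroids T w) \<noteq> 2"
  proof
    assume P2
    then obtain v B where "centroids T w = {Inl v, Inr B}" unfolding P2_def by blast
    then show False using that by simp
  qed
  from W.classify show ?thesis
  proof (elim disjE exE conjE)
    fix c assume C: "centroids T w = {c}" and h: "2 * hs T w c < n"
    have "P1" unfolding P1_def using C h by (intro exI[of _ c]) simp
    then show ?thesis using c1 c3 C by simp
  next
    fix a b
    assume e: "{a,b} \<in> edges T" and C: "centroids T w = {a,b}"
      and wa: "2 * W.W (side_of_edge T {a,b} a) = n" and wb: "2 * W.W (side_of_edge T {a,b} b) = n"
      and sa: "\<forall>S. subtree_set T S \<and> S \<subseteq> side_of_edge T {a,b} a \<and> a \<notin> S \<longrightarrow> 2 * (W.W S + 1) \<le> n"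
      and sb: "\<forall>S. subtree_set T S \<and> S \<subseteq> side_of_edge T {a,b} b \<and> b \<notin> S \<longrightarrow> 2 * (W.W S + 1) \<le> n"
    have e': "{a,b} \<in> edges (block_tree G)" using e T_def by simp
    obtain v B where vB: "cut_vertex G v" "is_block G B" "v \<in> verts B"
      "(a = Inl v \<and> b = Inr B) \<or> (a = Inr B \<and> b = Inl v)" using edge_form[OF e'] by blast
    have ab: "a \<noteq> b" using W.edge_props[OF e] by simp
    define Phi where "Phi x \<longleftrightarrow> 2 * W.W (side_of_edge T {Inl v, Inr B} x) = n \<and>
       (\<forall>S. subtree_set T S \<and> S \<subseteq> side_of_edge T {Inl v, Inr B} x \<and> x \<notin> S \<longrightarrow> 2 * (W.W S + 1) \<le> n)" for x
    have eq: "{a,b} = {Inl v, Inr B}" using vB(4) by auto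
    have pa: "Phi a" unfolding Phi_def eq[symmetric] using wa sa by blast
    have pb: "Phi b" unfolding Phi_def eq[symmetric] using wb sb by blast
    have ph: "Phi (Inl v) \<and> Phi (Inr B)"
    proof (cases "a = Inl v \<and> b = Inr B")
      case True then show ?thesis using pa pb by simp
    next
      case False
      then have "a = Inr B" "b = Inl v" using vB(4) by auto
      then show ?thesis using pa pb by simp
    qed
    have r: "real (set_weight w X) = real n / 2" if "2 * W.W X = n" for X
    proof -
      have "2 * set_weight w X = n" using that WW by simp
      then have "real (2 * set_weight w X) = real n" by simp
      then show ?thesis by simp
    qed
    have r2: "real (set_weight w X) \<le> real n / 2 - 1" if "2 * (W.W X + 1) \<le> n" for X
    proof -
      have "2 * (set_weight w X + 1) \<le> n" using that WW by simp
      then have "real (2 * (set_weight w X + 1)) \<le> real n" by (simp only: of_nat_le_iff)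
      then show ?thesis by simp
    qed
    let ?sl = "side_of_edge T {Inl v, Inr B} (Inl v)"
    let ?sr = "side_of_edge T {Inl v, Inr B} (Inr B)"
    have h1: "2 * W.W ?sl = n" "\<forall>S. subtree_set T S \<and> S \<subseteq> ?sl \<and> Inl v \<notin> S \<longrightarrow> 2 * (W.W S + 1) \<le> n"
      using ph unfolding Phi_def by auto
    have h2: "2 * W.W ?sr = n" "\<forall>S. subtree_set T S \<and> S \<subseteq> ?sr \<and> Inr B \<notin> S \<longrightarrow> 2 * (W.W S + 1) \<le> n"
      using ph unfolding Phi_def by auto
    have C': "centroids T w = {Inl v, Inr B}" using C eq by simp
    have A1: "\<forall>S. subtree_set T S \<and> S \<subseteq> ?sl \<and> Inl v \<notin> S \<longrightarrow> real (set_weight w S) \<le> real n / 2 - 1"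
      using h1(2) r2 by blast
    have A2: "\<forall>S. subtree_set T S \<and> S \<subseteq> ?sr \<and> Inr B \<notin> S \<longrightarrow> real (set_weight w S) \<le> real n / 2 - 1"
      using h2(2) r2 by blast
    have P2 unfolding P2_def
      by (rule exI[of _ v], rule exI[of _ B], intro conjI, fact vB(1), fact vB(2), fact vB(3), fact C',
          rule r[OF h1(1)], rule r[OF h2(1)], fact A1, fact A2)
    moreover have "card (centroids T w) = 2" using C ab by simp
    ultimately show ?thesis using c1' c3 by simp
  next
    fix y K1 K2
    assume wy: "w y = 0" and yV: "y \<in> verts T" and cen: "{c. central_centroid T w c} = {y}"
      and card3: "card (centroids T w) = 3" and K12: "K1 \<noteq> K2" and sub: "subtrees_of T y = {K1, K2}"
      and w1: "2 * W.W K1 = n" and w2: "2 * W.W K2 = n"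
    have "y \<in> verts (block_tree G)" using yV T_def by simp
    then consider (l) v where "y = Inl v" | (r) B where "y = Inr B" "is_block G B" unfolding BT_verts by blast
    then obtain B where yB: "y = Inr B" "is_block G B"
    proof cases
      case l then show ?thesis using wy w_def by (simp add: bt_weight_def)
    next
      case r then show ?thesis using that by blast
    qed
    have n2: "2 \<le> card (verts G)"
    proof -
      have "0 < n" by (rule W.npos)
      then have "0 < W.W K1" using w1 by simp
      then show ?thesis using w1 n_def by simp
    qed
    have two: "card (verts B) = 2 \<and> edges B = {verts B}"
      using zero_block_two[OF cg yB(2), of K1 K2] wy sub yB(1) n2 T_def w_def by simp
    have r: "real (set_weight w X) = real n / 2" if "2 * W.W X = n" for X
    proof -
      have "2 * set_weight w X = n" using that WW by simp
      then have "real (2 * set_weight w X) = real n" by simp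
      then show ?thesis by simp
    qed
    have ex: "\<exists>T1 T2. T1 \<noteq> T2 \<and> subtrees_of T (Inr B) = {T1, T2} \<and>
                  real (set_weight w T1) = real n / 2 \<and> real (set_weight w T2) = real n / 2"
      using K12 sub yB(1) r[OF w1] r[OF w2] by (intro exI[of _ K1] exI[of _ K2]) simp
    have wB: "w (Inr B) = 0" using wy yB(1) by simp
    have cB: "{c. central_centroid T w c} = {Inr B}" using cen yB(1) by simp
    have P3 unfolding P3_def
      by (rule exI[of _ B], intro conjI, fact yB(2), fact wB, fact cB, fact card3, fact ex,
          rule conjunct1[OF two], rule conjunct2[OF two])
    then show ?thesis using c1' c2' card3 by simp
  qed
qed

end
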